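(* $\mathcal R$ is a finite-length abelian category, and hence every rational $\mathfrak{sl}(2)$-module has Jordan–Hölder filtrations by rational submodules. Moreover, $\mathcal R$ is a Krull–Schmidt category, and therefore every rational module has a Remak decomposition into a finite direct sum of indecomposable rational modules, unique up to reordering of the direct summands (and isomorphism).
   Context: $\mathfrak{sl}(2)$ has basis $L_{-1}=f$, $L_0=-\tfrac12 h$, $L_1=-e$ for a Chevalley basis $e,f,h$. Every $\mathfrak{sl}(2)$-module $(V,\rho)$ is a $\mathbb{C}[z]$-module via $z\cdot v=\rho(L_0)v$. A rational $\mathfrak{sl}(2)$-module is one which, with this structure, is a finite-dimensional $\mathbb{C}(z)$-vector space. $\mathcal R$ denotes the full subcategory of the category of $\mathfrak{sl}(2)$-modules formed by rational modules (morphisms are $\mathfrak{sl}(2)$-homomorphisms, automatically $\mathbb{C}(z)$-linear); it is an abelian $\mathbb{C}$-linear category. *)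

theory Defs
  imports "HOL-Analysis.Analysis" "HOL-Computational_Algebra.Polynomial"
begin

definition sl2_module ::
  "(complex \<Rightarrow> 'v::ab_group_add \<Rightarrow> 'v) \<Rightarrow> 'v set \<Rightarrow> ('v \<Rightarrow> 'v) \<Rightarrow> ('v \<Rightarrow> 'v) \<Rightarrow> ('v \<Rightarrow> 'v) \<Rightarrow> bool"
  where "sl2_module smul V e f h \<longleftrightarrow>
     module.subspace smul V \<and>
     (\<forall>x\<in>{e, f, h}. (\<forall>v\<in>V. x v \<in> V) \<and>
         (\<forall>u\<in>V. \<forall>v\<in>V. x (u + v) = x u + x v) \<and>
         (\<forall>c. \<forall>v\<in>V. x (smul c v) = smul c (x v))) \<and>
     (\<forall>v\<in>V. h (e v) - e (h v) = smul 2 (e v)) \<and>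
     (\<forall>v\<in>V. h (f v) - f (h v) = smul (-2) (f v)) \<and>
     (\<forall>v\<in>V. e (f v) - f (e v) = h v)"

text \<open>L_0 = -h/2, and the resulting C[z]-module structure z.v = L_0 v.\<close>

definition L0 :: "(complex \<Rightarrow> 'v \<Rightarrow> 'v) \<Rightarrow> ('v \<Rightarrow> 'v) \<Rightarrow> 'v \<Rightarrow> 'v"
  where "L0 smul h = (\<lambda>v. smul (- 1 / 2) (h v))"

definition polyact :: "(complex \<Rightarrow> 'v::ab_group_add \<Rightarrow> 'v) \<Rightarrow> ('v \<Rightarrow> 'v) \<Rightarrow> complex poly \<Rightarrow> 'v \<Rightarrow> 'v"
  where "polyact smul h p v = (\<Sum>i\<le>degree p. smul (coeff p i) ((L0 smul h ^^ i) v))"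

text \<open>Rational module: the C[z]-module structure extends (necessarily uniquely) to a
 C(z)-vector space structure, i.e. every nonzero polynomial in L_0 acts bijectively,
 and this C(z)-vector space is finite dimensional, i.e. there is a finite set S such
 that every v is a C(z)-linear combination of S: p(L_0) v = sum_s c_s(L_0) s for some p \<noteq> 0.\<close>

definition rational_module ::
  "(complex \<Rightarrow> 'v::ab_group_add \<Rightarrow> 'v) \<Rightarrow> 'v set \<Rightarrow> ('v \<Rightarrow> 'v) \<Rightarrow> ('v \<Rightarrow> 'v) \<Rightarrow> ('v \<Rightarrow> 'v) \<Rightarrow> bool"
  where "rational_module smul V e f h \<longleftrightarrow>
     sl2_module smul V e f h \<and>
     (\<forall>p. p \<noteq> 0 \<longrightarrow> bij_betw (polyact smul h p) V V) \<and>
     (\<exists>S. finite S \<and> S \<subseteq> V \<and>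
        (\<forall>v\<in>V. \<exists>p c. p \<noteq> 0 \<and> polyact smul h p v = (\<Sum>s\<in>S. polyact smul h (c s) s)))"

definition rational_submodule where
  "rational_submodule smul W V e f h \<longleftrightarrow> W \<subseteq> V \<and> rational_module smul W e f h"

text \<open>Jordan--Hoelder filtration of V in R: 0 = V_0 < V_1 < ... < V_n = V by rational
 submodules with each V_{i+1}/V_i simple in R, i.e. no rational submodule strictly between.\<close>

definition jordan_hoelder_filtration ::
  "(complex \<Rightarrow> 'v::ab_group_add \<Rightarrow> 'v) \<Rightarrow> 'v set \<Rightarrow> ('v \<Rightarrow> 'v) \<Rightarrow> ('v \<Rightarrow> 'v) \<Rightarrow> ('v \<Rightarrow> 'v)
    \<Rightarrow> (nat \<Rightarrow> 'v set) \<Rightarrow> nat \<Rightarrow> bool" where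
  "jordan_hoelder_filtration smul V e f h Vs n \<longleftrightarrow>
     Vs 0 = {0} \<and> Vs n = V \<and>
     (\<forall>i\<le>n. rational_submodule smul (Vs i) V e f h) \<and>
     (\<forall>i<n. Vs i \<subset> Vs (Suc i) \<and>
        \<not> (\<exists>U. rational_submodule smul U V e f h \<and> Vs i \<subset> U \<and> U \<subset> Vs (Suc i)))"

definition direct_sum_decomp ::
  "(complex \<Rightarrow> 'v::ab_group_add \<Rightarrow> 'v) \<Rightarrow> 'v set \<Rightarrow> ('v \<Rightarrow> 'v) \<Rightarrow> ('v \<Rightarrow> 'v) \<Rightarrow> ('v \<Rightarrow> 'v)
    \<Rightarrow> (nat \<Rightarrow> 'v set) \<Rightarrow> nat \<Rightarrow> bool" where
  "direct_sum_decomp smul V e f h Ws n \<longleftrightarrow>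
     (\<forall>i<n. rational_submodule smul (Ws i) V e f h) \<and>
     (\<forall>v\<in>V. \<exists>!w. (\<forall>i<n. w i \<in> Ws i) \<and> (\<forall>i\<ge>n. w i = 0) \<and> v = (\<Sum>i<n. w i))"

definition indecomposable where
  "indecomposable smul W e f h \<longleftrightarrow>
     rational_module smul W e f h \<and> W \<noteq> {0} \<and>
     \<not> (\<exists>Ws. direct_sum_decomp smul W e f h Ws 2 \<and> Ws 0 \<noteq> {0} \<and> Ws 1 \<noteq> {0})"

definition sl2_hom where
  "sl2_hom smul W U e f h \<phi> \<longleftrightarrow>
     (\<forall>v\<in>W. \<phi> v \<in> U) \<and>
     (\<forall>u\<in>W. \<forall>v\<in>W. \<phi> (u + v) = \<phi> u + \<phi> v) \<and>
     (\<forall>c. \<forall>v\<in>W. \<phi> (smul c v) = smul c (\<phi> v)) \<and>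
     (\<forall>x\<in>{e, f, h}. \<forall>v\<in>W. \<phi> (x v) = x (\<phi> v))"

definition sl2_iso where
  "sl2_iso smul W U e f h \<longleftrightarrow> (\<exists>\<phi>. sl2_hom smul W U e f h \<phi> \<and> bij_betw \<phi> W U)"

text \<open>The endomorphism ring End_R(W) is local: W \<noteq> 0 and the non-units are closed
 under addition (units of End_R(W) are the bijective endomorphisms).\<close>

definition local_endomorphism_ring where
  "local_endomorphism_ring smul W e f h \<longleftrightarrow> W \<noteq> {0} \<and>
     (\<forall>\<phi> \<psi>. sl2_hom smul W W e f h \<phi> \<and> sl2_hom smul W W e f h \<psi> \<and>
        \<not> bij_betw \<phi> W W \<and> \<not> bij_betw \<psi> W W \<longrightarrow>
        \<not> bij_betw (\<lambda>v. \<phi> v + \<psi> v) W W)"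

end

theory Submission
  imports Defs "HOL-Computational_Algebra.Fraction_Field" "HOL-Library.Function_Algebras"
begin

definition lin :: "(complex \<Rightarrow> 'v::ab_group_add \<Rightarrow> 'v) \<Rightarrow> 'v set \<Rightarrow> 'v set \<Rightarrow> ('v \<Rightarrow> 'v) \<Rightarrow> bool" where
  "lin smul V W g \<longleftrightarrow> (\<forall>v\<in>V. g v \<in> W) \<and> (\<forall>u\<in>V. \<forall>v\<in>V. g (u + v) = g u + g v) \<and>
     (\<forall>c. \<forall>v\<in>V. g (smul c v) = smul c (g v))"

locale sl2c = vector_space smul for smul :: "complex \<Rightarrow> 'v::ab_group_add \<Rightarrow> 'v" +
  fixes e f h :: "'v \<Rightarrow> 'v"
begin

lemma linD: assumes "lin smul V W g"
  shows "v \<in> V \<Longrightarrow> g v \<in> W" "u \<in> V \<Longrightarrow> v \<in> V \<Longrightarrow> g (u + v) = g u + g v"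
    "v \<in> V \<Longrightarrow> g (smul c v) = smul c (g v)"
  using assms unfolding lin_def by auto

lemma lin_zero: assumes "lin smul V W g" "subspace V" shows "g 0 = 0"
proof -
  have "0 \<in> V" using assms(2) subspace_0 by blast
  then have "g (0 + 0) = g 0 + g 0" using linD(2)[OF assms(1)] by blast
  then show ?thesis by simp
qed

lemma lin_neg: assumes "lin smul V W g" "subspace V" "v \<in> V" shows "g (- v) = - g v"
proof -
  have "-v \<in> V" using assms subspace_neg by blast
  then have "g (-v + v) = g (-v) + g v" using linD(2)[OF assms(1)] assms(3) by blast
  then show ?thesis using lin_zero[OF assms(1,2)] by (simp add: eq_neg_iff_add_eq_0)
qed

lemma lin_diff: assumes "lin smul V W g" "subspace V" "u \<in> V" "v \<in> V" shows "g (u - v) = g u - g v"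
proof -
  have "-v \<in> V" using assms subspace_neg by blast
  then show ?thesis using linD(2)[OF assms(1) assms(3), of "-v"] lin_neg[OF assms(1,2,4)] by simp
qed

lemma lin_sum: assumes "lin smul V W g" "subspace V" "\<And>i. i \<in> A \<Longrightarrow> x i \<in> V"
  shows "g (\<Sum>i\<in>A. x i) = (\<Sum>i\<in>A. g (x i))"
  using assms(3)
proof (induction A rule: infinite_finite_induct)
  case (infinite A) then show ?case using lin_zero[OF assms(1,2)] by simp
next
  case empty then show ?case using lin_zero[OF assms(1,2)] by simp
next
  case (insert a A)
  have "sum x A \<in> V" using insert.prems assms(2) subspace_sum by blast
  then show ?case using insert linD(2)[OF assms(1)] by simp
qed

lemma lin_comp: "lin smul U V g \<Longrightarrow> lin smul V W k \<Longrightarrow> lin smul U W (k \<circ> g)"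
  unfolding lin_def by auto

lemma lin_id: "lin smul V V id"
  unfolding lin_def by auto

lemma lin_pow: "lin smul V V g \<Longrightarrow> lin smul V V (g ^^ n)"
  by (induction n) (auto simp: lin_id intro: lin_comp)

lemma lin_mono: "lin smul V W g \<Longrightarrow> U \<subseteq> V \<Longrightarrow> W \<subseteq> W' \<Longrightarrow> lin smul U W' g"
  unfolding lin_def by blast

lemma sl2_lin: assumes "sl2_module smul V e f h"
  shows "lin smul V V e" "lin smul V V f" "lin smul V V h" "subspace V"
  using assms unfolding sl2_module_def lin_def by auto

lemma lin_L0: assumes "lin smul V V h" "subspace V" shows "lin smul V V (L0 smul h)"
  using assms unfolding lin_def L0_def
  by (auto simp: subspace_scale subspace_neg scale_right_distrib scale_left_commute)

lemma polyact_alt: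
  assumes "lin smul V V h" "subspace V" "degree p < N"
  shows "polyact smul h p v = (\<Sum>i<N. smul (coeff p i) ((L0 smul h ^^ i) v))"
  unfolding polyact_def
proof -
  have "{..degree p} \<subseteq> {..<N}" using assms(3) by auto
  moreover have "\<forall>i\<in>{..<N} - {..degree p}. smul (coeff p i) ((L0 smul h ^^ i) v) = 0"
    by (auto simp: coeff_eq_0)
  ultimately show "(\<Sum>i\<le>degree p. smul (coeff p i) ((L0 smul h ^^ i) v)) =
     (\<Sum>i<N. smul (coeff p i) ((L0 smul h ^^ i) v))"
    by (intro sum.mono_neutral_left) auto
qed

lemma polyact_in: assumes "lin smul V V h" "subspace V" "v \<in> V" shows "polyact smul h p v \<in> V"
  unfolding polyact_def
  using lin_pow[OF lin_L0[OF assms(1,2)]] assms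
  by (intro subspace_sum[OF assms(2)]) (auto intro!: subspace_scale simp: lin_def)

lemma polyact_add_poly: assumes "lin smul V V h" "subspace V"
  shows "polyact smul h (p + q) v = polyact smul h p v + polyact smul h q v"
proof -
  define N where "N = Suc (max (degree p) (degree q))"
  have "degree (p + q) < N" "degree p < N" "degree q < N"
    unfolding N_def using degree_add_le_max[of p q] by auto
  then show ?thesis using polyact_alt[OF assms]
    by (simp add: scale_left_distrib sum.distrib)
qed

lemma polyact_zero_poly [simp]: "polyact smul h 0 v = 0"
  by (simp add: polyact_def)

lemma polyact_sum_poly: assumes "lin smul V V h" "subspace V"
  shows "polyact smul h (\<Sum>i\<in>A. p i) v = (\<Sum>i\<in>A. polyact smul h (p i) v)"
  by (induction A rule: infinite_finite_induct) (simp_all add: polyact_add_poly[OF assms])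

lemma polyact_const: "polyact smul h [:c:] v = smul c v"
  by (simp add: polyact_def)

lemma polyact_one: "polyact smul h 1 v = v"
  by (simp add: polyact_def)

lemma lin_polyact: assumes "lin smul V V h" "subspace V"
  shows "lin smul V V (polyact smul h p)"
proof -
  have L: "lin smul V V (L0 smul h ^^ i)" for i using lin_pow[OF lin_L0[OF assms]] .
  show ?thesis unfolding lin_def
  proof (intro conjI ballI allI)
    fix v assume "v \<in> V" then show "polyact smul h p v \<in> V" using polyact_in[OF assms] by blast
  next
    fix u v assume uv: "u \<in> V" "v \<in> V"
    then show "polyact smul h p (u + v) = polyact smul h p u + polyact smul h p v"
      unfolding polyact_def using linD(2)[OF L]
      by (simp add: scale_right_distrib sum.distrib)
  next
    fix c v assume "v \<in> V"
    then show "polyact smul h p (smul c v) = smul c (polyact smul h p v)"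
      unfolding polyact_def using linD(3)[OF L]
      by (simp add: scale_sum_right scale_left_commute mult.commute)
  qed
qed

lemma polyact_pCons: assumes "lin smul V V h" "subspace V" "v \<in> V"
  shows "polyact smul h (pCons a p) v = smul a v + L0 smul h (polyact smul h p v)"
proof -
  define N where "N = Suc (degree p)"
  have d1: "degree (pCons a p) < Suc N" "degree p < N" unfolding N_def
    by (auto simp: degree_pCons_le le_less_trans)
  have LL: "lin smul V V (L0 smul h)" using lin_L0[OF assms(1,2)] .
  have inV: "\<And>i. smul (coeff p i) ((L0 smul h ^^ i) v) \<in> V"
    using lin_pow[OF LL] assms(3) by (auto intro!: subspace_scale[OF assms(2)] simp: lin_def)
  have "polyact smul h (pCons a p) v = (\<Sum>i<Suc N. smul (coeff (pCons a p) i) ((L0 smul h ^^ i) v))"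
    using polyact_alt[OF assms(1,2) d1(1)] .
  also have "\<dots> = smul a v + (\<Sum>i<N. smul (coeff p i) ((L0 smul h ^^ Suc i) v))"
    by (subst sum.lessThan_Suc_shift) simp
  also have "(\<Sum>i<N. smul (coeff p i) ((L0 smul h ^^ Suc i) v)) = (\<Sum>i<N. L0 smul h (smul (coeff p i) ((L0 smul h ^^ i) v)))"
    using linD(3)[OF LL] lin_pow[OF LL] assms(3) by (auto simp: lin_def)
  also have "\<dots> = L0 smul h (\<Sum>i<N. smul (coeff p i) ((L0 smul h ^^ i) v))"
    using lin_sum[OF LL assms(2), of "{..<N}" "\<lambda>i. smul (coeff p i) ((L0 smul h ^^ i) v)"] inV by simp
  also have "(\<Sum>i<N. smul (coeff p i) ((L0 smul h ^^ i) v)) = polyact smul h p v"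
    using polyact_alt[OF assms(1,2) d1(2)] by simp
  finally show ?thesis .
qed

lemma polyact_smult: assumes "lin smul V V h" "subspace V" "v \<in> V"
  shows "polyact smul h (smult a p) v = smul a (polyact smul h p v)"
  unfolding polyact_def
  by (cases "a = 0") (simp_all add: scale_sum_right)

lemma polyact_mult: assumes "lin smul V V h" "subspace V" "v \<in> V"
  shows "polyact smul h (p * q) v = polyact smul h p (polyact smul h q v)"
proof (induction p)
  case (pCons a p)
  have LL: "lin smul V V (L0 smul h)" using lin_L0[OF assms(1,2)] .
  have qv: "polyact smul h q v \<in> V" using polyact_in[OF assms] .
  have pqv: "polyact smul h (p * q) v \<in> V" using polyact_in[OF assms] .
  have "pCons a p * q = smult a q + pCons 0 (p * q)" by simp
  then have "polyact smul h (pCons a p * q) v = smul a (polyact smul h q v) + polyact smul h (pCons 0 (p * q)) v"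
    using polyact_add_poly[OF assms(1,2)] polyact_smult[OF assms] by simp
  also have "polyact smul h (pCons 0 (p * q)) v = L0 smul h (polyact smul h (p * q) v)"
    using polyact_pCons[OF assms, of 0 "p * q"] by simp
  also have "smul a (polyact smul h q v) + L0 smul h (polyact smul h (p * q) v) = polyact smul h (pCons a p) (polyact smul h q v)"
    using polyact_pCons[OF assms(1,2) qv, of a p] pCons.IH by simp
  finally show ?case .
qed simp

lemma polyact_sum_vec: assumes "lin smul V V h" "subspace V" "\<And>i. i \<in> A \<Longrightarrow> x i \<in> V"
  shows "polyact smul h p (\<Sum>i\<in>A. x i) = (\<Sum>i\<in>A. polyact smul h p (x i))"
  using lin_sum[OF lin_polyact[OF assms(1,2)] assms(2,3)] .

lemma polyact_hom:
  assumes "lin smul V V h" "subspace V" "lin smul W W h" "subspace W" "lin smul V W g"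
    "\<And>v. v \<in> V \<Longrightarrow> g (h v) = h (g v)" "v \<in> V"
  shows "g (polyact smul h p v) = polyact smul h p (g v)"
proof -
  have LV: "lin smul V V (L0 smul h ^^ i)" for i using lin_pow[OF lin_L0[OF assms(1,2)]] .
  have gL: "u \<in> V \<Longrightarrow> g ((L0 smul h ^^ i) u) = (L0 smul h ^^ i) (g u)" for u i
  proof (induction i arbitrary: u)
    case (Suc i)
    have "(L0 smul h ^^ i) u \<in> V" using LV Suc.prems by (auto simp: lin_def)
    then have hw: "h ((L0 smul h ^^ i) u) \<in> V" using assms(1) by (auto simp: lin_def)
    have "g ((L0 smul h ^^ Suc i) u) = g (smul (-1/2) (h ((L0 smul h ^^ i) u)))"
      by (simp only: funpow.simps comp_def L0_def)
    also have "\<dots> = smul (-1/2) (g (h ((L0 smul h ^^ i) u)))"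
      using linD(3)[OF assms(5) hw] .
    also have "\<dots> = smul (-1/2) (h ((L0 smul h ^^ i) (g u)))"
      using assms(6)[OF \<open>(L0 smul h ^^ i) u \<in> V\<close>] Suc by simp
    also have "\<dots> = (L0 smul h ^^ Suc i) (g u)"
      by (simp only: funpow.simps comp_def L0_def)
    finally show ?case .
  qed simp
  have "g (polyact smul h p v) = (\<Sum>i\<le>degree p. g (smul (coeff p i) ((L0 smul h ^^ i) v)))"
    unfolding polyact_def
    using assms(7) LV by (intro lin_sum[OF assms(5,2)]) (auto intro!: subspace_scale[OF assms(2)] simp: lin_def)
  also have "\<dots> = polyact smul h p (g v)"
    unfolding polyact_def using assms(7) LV gL linD(3)[OF assms(5)] by (auto simp: lin_def intro!: sum.cong)
  finally show ?thesis .
qed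

end


context sl2c
begin

abbreviation pa where "pa \<equiv> polyact smul h"
abbreviation ratm where "ratm V \<equiv> rational_module smul V e f h"

definition pindep :: "'v set \<Rightarrow> bool" where
  "pindep T \<longleftrightarrow> finite T \<and> (\<forall>c. (\<Sum>t\<in>T. pa (c t) t) = 0 \<longrightarrow> (\<forall>t\<in>T. c t = 0))"

lemma ratmD:
  assumes "ratm V"
  shows "sl2_module smul V e f h" "\<And>p. p \<noteq> 0 \<Longrightarrow> bij_betw (pa p) V V"
    "\<exists>S. finite S \<and> S \<subseteq> V \<and> (\<forall>v\<in>V. \<exists>p c. p \<noteq> 0 \<and> pa p v = (\<Sum>s\<in>S. pa (c s) s))"
  using assms unfolding rational_module_def by auto

lemma sum_fun_app: "(\<Sum>i\<in>A. g i) x = (\<Sum>i\<in>A. g i x)"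
  by (induction A rule: infinite_finite_induct) auto

lemma sum_Fract1: "(\<Sum>i\<in>A. Fract (g i) (1::'a::idom)) = Fract (\<Sum>i\<in>A. g i) 1"
  by (induction A rule: infinite_finite_induct) (auto simp: Zero_fract_def)

lemma polyact_neg_poly: assumes "lin smul V V h" "subspace V"
  shows "pa (- p) v = - pa p v"
proof -
  have "pa (p + - p) v = pa p v + pa (-p) v" using polyact_add_poly[OF assms] .
  then show ?thesis by (simp add: eq_neg_iff_add_eq_0 add.commute)
qed

lemma span_bound:
  assumes "ratm V"
  shows "\<exists>N. \<forall>T. T \<subseteq> V \<and> pindep T \<longrightarrow> card T \<le> N"
proof -
  have M: "sl2_module smul V e f h" using ratmD(1)[OF assms] .
  have hV: "lin smul V V h" and sV: "subspace V" using sl2_lin[OF M] by auto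
  obtain S where S: "finite S" "S \<subseteq> V" "\<forall>v\<in>V. \<exists>p c. p \<noteq> 0 \<and> pa p v = (\<Sum>s\<in>S. pa (c s) s)"
    using ratmD(3)[OF assms] by blast
  have "card T \<le> card S" if T: "T \<subseteq> V" "pindep T" for T
  proof -
    have fT: "finite T" using T(2) pindep_def by auto
    obtain P C where PC: "\<forall>t\<in>T. P t \<noteq> 0 \<and> pa (P t) t = (\<Sum>s\<in>S. pa (C t s) s)"
      using S(3) T(1) by (metis subsetD)
    define a where "a t = (\<lambda>s. if s \<in> S then Fract (C t s) (P t) else 0)" for t
    define fs :: "complex poly fract \<Rightarrow> ('v \<Rightarrow> complex poly fract) \<Rightarrow> ('v \<Rightarrow> complex poly fract)"
      where "fs c x = (\<lambda>s. c * x s)" for c x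
    interpret FS: vector_space fs
      by unfold_locales (auto simp: fs_def algebra_simps)
    have K: "\<forall>t\<in>T. lam t = 0" if sum0: "(\<Sum>t\<in>T. fs (lam t) (a t)) = 0" for lam
    proof -
      have "\<forall>t. \<exists>n d. lam t = Fract n d \<and> d \<noteq> 0" by (metis Fract_cases)
      then obtain n d where nd: "\<And>t. lam t = Fract (n t) (d t)" "\<And>t. d t \<noteq> 0" by metis
      define Mt where "Mt t = d t * P t" for t
      have Mnz: "t \<in> T \<Longrightarrow> Mt t \<noteq> 0" for t using nd(2) PC by (simp add: Mt_def)
      define Q where "Q t = (\<Prod>t'\<in>T - {t}. Mt t')" for t
      have Qnz: "Q t \<noteq> 0" for t unfolding Q_def using Mnz fT by (auto simp: prod_zero_iff)
      define D where "D = (\<Prod>t\<in>T. Mt t)"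
      have DQ: "t \<in> T \<Longrightarrow> D = Mt t * Q t" for t
        unfolding D_def Q_def using fT by (simp add: prod.remove)
      have zs: "(\<Sum>t\<in>T. Q t * n t * C t s) = 0" if s: "s \<in> S" for s
      proof -
        have "(\<Sum>t\<in>T. lam t * a t s) = 0"
          using fun_cong[OF sum0, of s] by (simp add: sum_fun_app fs_def)
        then have "Fract D 1 * (\<Sum>t\<in>T. lam t * a t s) = 0" by simp
        also have "Fract D 1 * (\<Sum>t\<in>T. lam t * a t s) = (\<Sum>t\<in>T. Fract (Q t * n t * C t s) 1)"
          unfolding sum_distrib_left
        proof (rule sum.cong[OF refl])
          fix t assume t: "t \<in> T"
          have "Fract D 1 * (lam t * a t s) = Fract (Mt t * (Q t * n t * C t s)) (Mt t * 1)"
            using s DQ[OF t] by (simp add: a_def nd Mt_def algebra_simps)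
          also have "\<dots> = Fract (Q t * n t * C t s) 1"
            using mult_fract_cancel[OF Mnz[OF t], of "Q t * n t * C t s" 1] by simp
          finally show "Fract D 1 * (lam t * a t s) = Fract (Q t * n t * C t s) 1" .
        qed
        finally have "Fract (\<Sum>t\<in>T. Q t * n t * C t s) 1 = Fract 0 1"
          by (simp add: sum_Fract1 Zero_fract_def)
        then show ?thesis by (simp add: eq_fract)
      qed
      define c where "c t = Q t * n t * P t" for t
      have TV: "t \<in> T \<Longrightarrow> t \<in> V" for t using T by auto
      have SV: "s \<in> S \<Longrightarrow> s \<in> V" for s using S by auto
      have "(\<Sum>t\<in>T. pa (c t) t) = (\<Sum>t\<in>T. pa (Q t * n t) (pa (P t) t))"
        unfolding c_def using TV by (intro sum.cong) (auto simp: polyact_mult[OF hV sV] polyact_in[OF hV sV])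
      also have "\<dots> = (\<Sum>t\<in>T. pa (Q t * n t) (\<Sum>s\<in>S. pa (C t s) s))"
        using PC by auto
      also have "\<dots> = (\<Sum>t\<in>T. \<Sum>s\<in>S. pa (Q t * n t * C t s) s)"
      proof (rule sum.cong[OF refl])
        fix t assume "t \<in> T"
        have "pa (Q t * n t) (\<Sum>s\<in>S. pa (C t s) s) = (\<Sum>s\<in>S. pa (Q t * n t) (pa (C t s) s))"
          using polyact_sum_vec[OF hV sV, of S "\<lambda>s. pa (C t s) s"] polyact_in[OF hV sV] SV by blast
        also have "\<dots> = (\<Sum>s\<in>S. pa (Q t * n t * C t s) s)"
          using polyact_mult[OF hV sV] SV by (intro sum.cong) auto
        finally show "pa (Q t * n t) (\<Sum>s\<in>S. pa (C t s) s) = (\<Sum>s\<in>S. pa (Q t * n t * C t s) s)" .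
      qed
      also have "\<dots> = (\<Sum>s\<in>S. \<Sum>t\<in>T. pa (Q t * n t * C t s) s)"
        by (rule sum.swap)
      also have "\<dots> = (\<Sum>s\<in>S. pa (\<Sum>t\<in>T. Q t * n t * C t s) s)"
        by (simp only: polyact_sum_poly[OF hV sV])
      also have "\<dots> = 0" using zs by simp
      finally have "\<forall>t\<in>T. c t = 0" using T(2) unfolding pindep_def by blast
      then show ?thesis using Qnz PC nd by (auto simp: c_def eq_fract(3) Zero_fract_def)
    qed
    have inj: "inj_on a T"
    proof (rule inj_onI, rule ccontr)
      fix t1 t2 assume t: "t1 \<in> T" "t2 \<in> T" "a t1 = a t2" "t1 \<noteq> t2"
      define lam where "lam t = (if t = t1 then 1 else if t = t2 then -1 else (0::complex poly fract))" for t
      have "(\<Sum>t\<in>T. fs (lam t) (a t)) = (\<Sum>t\<in>{t1, t2}. fs (lam t) (a t))"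
        using t fT by (intro sum.mono_neutral_right) (auto simp: lam_def fs_def)
      also have "\<dots> = 0" using t by (simp add: lam_def fs_def fun_eq_iff)
      finally have "lam t1 = 0" using K t by blast
      then show False by (simp add: lam_def)
    qed
    define del :: "'v \<Rightarrow> 'v \<Rightarrow> complex poly fract" where "del s = (\<lambda>s'. if s' = s then 1 else (0::complex poly fract))" for s
    have ind: "FS.independent (a ` T)"
    proof (rule FS.independent_if_scalars_zero)
      show "finite (a ` T)" using fT by simp
      fix g x assume g: "(\<Sum>x\<in>a ` T. fs (g x) x) = 0" and x: "x \<in> a ` T"
      have "(\<Sum>t\<in>T. fs (g (a t)) (a t)) = 0" using g sum.reindex[OF inj, of "\<lambda>x. fs (g x) x"] by (simp add: comp_def)
      then have "\<forall>t\<in>T. g (a t) = 0" using K[of "\<lambda>t. g (a t)"] by blast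
      then show "g x = 0" using x by auto
    qed
    have sp: "a ` T \<subseteq> FS.span (del ` S)"
    proof
      fix x assume "x \<in> a ` T"
      then obtain t where x: "x = a t" by auto
      have "x = (\<Sum>s\<in>S. fs (a t s) (del s))"
      proof
        fix s' show "x s' = (\<Sum>s\<in>S. fs (a t s) (del s)) s'"
        proof -
          have "(\<Sum>s\<in>S. fs (a t s) (del s)) s' = (\<Sum>s\<in>S. if s' = s then a t s else 0)"
            unfolding sum_fun_app fs_def del_def by (intro sum.cong) auto
          then show ?thesis using S(1) by (simp add: x a_def)
        qed
      qed
      also have "\<dots> \<in> FS.span (del ` S)"
        by (intro FS.span_sum FS.span_scale FS.span_base) auto
      finally show "x \<in> FS.span (del ` S)" .
    qed
    have "card (a ` T) \<le> card (del ` S)"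
      using FS.independent_span_bound[OF _ ind sp] S(1) by simp
    also have "\<dots> \<le> card S" using S(1) card_image_le by blast
    finally show ?thesis using card_image[OF inj] by simp
  qed
  then show ?thesis by blast
qed

end


context sl2c
begin

definition bnd :: "'v set \<Rightarrow> bool" where
  "bnd W \<longleftrightarrow> (\<exists>N. \<forall>T. T \<subseteq> W \<and> pindep T \<longrightarrow> card T \<le> N)"

definition rk :: "'v set \<Rightarrow> nat" where
  "rk W = Max (card ` {T. T \<subseteq> W \<and> pindep T})"

definition pcl :: "'v set \<Rightarrow> bool" where
  "pcl U \<longleftrightarrow> (\<forall>p. \<forall>u\<in>U. pa p u \<in> U)"

definition psurj :: "'v set \<Rightarrow> bool" where
  "psurj U \<longleftrightarrow> (\<forall>p. p \<noteq> 0 \<longrightarrow> (\<forall>u\<in>U. \<exists>w\<in>U. pa p w = u))"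

lemma pindep_empty: "pindep {}"
  by (simp add: pindep_def)

lemma bnd_ratm: assumes "ratm V" shows "bnd V"
  unfolding bnd_def by (rule span_bound[OF assms])

lemma bnd_mono: assumes "bnd V" "W \<subseteq> V" shows "bnd W"
proof -
  obtain N where N: "\<And>T. T \<subseteq> V \<Longrightarrow> pindep T \<Longrightarrow> card T \<le> N" using assms(1) unfolding bnd_def by blast
  have "\<forall>T. T \<subseteq> W \<and> pindep T \<longrightarrow> card T \<le> N"
  proof (intro allI impI)
    fix T assume "T \<subseteq> W \<and> pindep T"
    then show "card T \<le> N" using N[of T] assms(2) by (meson order_trans)
  qed
  then show ?thesis unfolding bnd_def by (rule exI)
qed

lemma rk_fin: assumes "bnd W" shows "finite (card ` {T. T \<subseteq> W \<and> pindep T})"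
proof -
  obtain N where "\<forall>T. T \<subseteq> W \<and> pindep T \<longrightarrow> card T \<le> N" using assms bnd_def by blast
  then have "card ` {T. T \<subseteq> W \<and> pindep T} \<subseteq> {..N}" by auto
  then show ?thesis using finite_subset by blast
qed

lemma rk_ge: assumes "bnd W" "T \<subseteq> W" "pindep T" shows "card T \<le> rk W"
proof -
  have "card T \<in> card ` {T. T \<subseteq> W \<and> pindep T}" using assms(2,3) by blast
  then show ?thesis unfolding rk_def by (rule Max_ge[OF rk_fin[OF assms(1)]])
qed

lemma rk_obt: assumes "bnd W" shows "\<exists>T. T \<subseteq> W \<and> pindep T \<and> card T = rk W"
proof -
  have "card ` {T. T \<subseteq> W \<and> pindep T} \<noteq> {}" using pindep_empty by blast
  then have "rk W \<in> card ` {T. T \<subseteq> W \<and> pindep T}" unfolding rk_def using Max_in rk_fin[OF assms] by blast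
  then show ?thesis by auto
qed

lemma rk_mono: assumes "bnd U'" "U \<subseteq> U'" shows "rk U \<le> rk U'"
proof -
  obtain T where "T \<subseteq> U" "pindep T" "card T = rk U" using rk_obt bnd_mono[OF assms] by blast
  then show ?thesis using rk_ge[OF assms(1), of T] assms(2) by auto
qed

lemma ratm_sub: "ratm V \<Longrightarrow> subspace V"
  by (rule sl2_lin(4)[OF ratmD(1)])

lemma ratm_hlin: "ratm V \<Longrightarrow> lin smul V V h"
  by (rule sl2_lin(3)[OF ratmD(1)])

lemma ratm_pcl: assumes "ratm V" shows "pcl V"
  unfolding pcl_def using polyact_in[OF ratm_hlin[OF assms] ratm_sub[OF assms]] by blast

lemma ratm_psurj: assumes "ratm V" shows "psurj V"
  unfolding psurj_def
proof (intro allI impI ballI)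
  fix p :: "complex poly" and u assume "p \<noteq> 0" "u \<in> V"
  then have "u \<in> pa p ` V" using bij_betw_imp_surj_on[OF ratmD(2)[OF assms]] by blast
  then show "\<exists>w\<in>V. pa p w = u" by blast
qed

lemma ratm_inj: assumes "ratm V" "p \<noteq> 0" "v \<in> V" "w \<in> V" "pa p v = pa p w" shows "v = w"
proof -
  have "inj_on (pa p) V" by (rule bij_betw_imp_inj_on[OF ratmD(2)[OF assms(1,2)]])
  then show ?thesis using inj_onD assms(3-5) by metis
qed


lemma rk_strict:
  assumes V: "ratm V" and UU: "U \<subseteq> U'" "U' \<subseteq> V" "U \<noteq> U'" and U: "subspace U" "pcl U" "psurj U"
  shows "rk U < rk U'"
proof -
  have bU: "bnd U" "bnd U'" using bnd_ratm[OF V] bnd_mono UU by blast+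
  obtain T where T: "T \<subseteq> U" "pindep T" "card T = rk U" using rk_obt[OF bU(1)] by blast
  obtain v where v: "v \<in> U'" "v \<notin> U" using UU by blast
  have fT: "finite T" using T pindep_def by auto
  have vT: "v \<notin> T" using v T by auto
  have "pindep (insert v T)"
    unfolding pindep_def
  proof (intro conjI allI impI)
    show "finite (insert v T)" using fT by simp
    fix c assume s0: "(\<Sum>t\<in>insert v T. pa (c t) t) = 0"
    then have s1: "pa (c v) v + (\<Sum>t\<in>T. pa (c t) t) = 0" using fT vT by simp
    have cv: "c v = 0"
    proof (rule ccontr)
      assume cv: "c v \<noteq> 0"
      have "(\<Sum>t\<in>T. pa (c t) t) \<in> U" using T(1) U(2) unfolding pcl_def
        by (intro subspace_sum[OF U(1)]) auto
      moreover have "pa (c v) v = - (\<Sum>t\<in>T. pa (c t) t)" using s1 by (simp add: eq_neg_iff_add_eq_0)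
      ultimately have "pa (c v) v \<in> U" using subspace_neg[OF U(1)] by simp
      then obtain w where w: "w \<in> U" "pa (c v) w = pa (c v) v" using U(3) cv unfolding psurj_def by blast
      have "w = v" using ratm_inj[OF V cv _ _ w(2)] w(1) v(1) UU by blast
      then show False using w v by simp
    qed
    then have "(\<Sum>t\<in>T. pa (c t) t) = 0" using s1 by simp
    then have "\<forall>t\<in>T. c t = 0" using T(2) pindep_def by blast
    then show "\<forall>t\<in>insert v T. c t = 0" using cv by simp
  qed
  moreover have "insert v T \<subseteq> U'" using T v UU by auto
  ultimately have "card (insert v T) \<le> rk U'" using rk_ge[OF bU(2)] by blast
  then show ?thesis using T(3) fT vT by simp
qed

lemma lin_restr: "lin smul V V x \<Longrightarrow> U \<subseteq> V \<Longrightarrow> (\<And>v. v \<in> U \<Longrightarrow> x v \<in> U) \<Longrightarrow> lin smul U U x"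
  unfolding lin_def by (auto simp: subset_iff)

lemma sl2_intro:
  assumes "subspace U" "lin smul U U e" "lin smul U U f" "lin smul U U h"
    "\<And>v. v \<in> U \<Longrightarrow> h (e v) - e (h v) = smul 2 (e v)"
    "\<And>v. v \<in> U \<Longrightarrow> h (f v) - f (h v) = smul (-2) (f v)"
    "\<And>v. v \<in> U \<Longrightarrow> e (f v) - f (e v) = h v"
  shows "sl2_module smul U e f h"
  unfolding sl2_module_def using assms unfolding lin_def by auto

lemma sl2_rel: assumes "sl2_module smul V e f h" "v \<in> V"
  shows "h (e v) - e (h v) = smul 2 (e v)" "h (f v) - f (h v) = smul (-2) (f v)" "e (f v) - f (e v) = h v"
  using assms unfolding sl2_module_def by auto

lemma sl2_sub:
  assumes MV: "sl2_module smul V e f h" and U: "U \<subseteq> V" "subspace U" "\<And>v. v \<in> U \<Longrightarrow> e v \<in> U \<and> f v \<in> U \<and> h v \<in> U"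
  shows "sl2_module smul U e f h"
proof (rule sl2_intro)
  show "subspace U" by fact
  show "lin smul U U e" using lin_restr[OF sl2_lin(1)[OF MV] U(1)] U(3) by blast
  show "lin smul U U f" using lin_restr[OF sl2_lin(2)[OF MV] U(1)] U(3) by blast
  show "lin smul U U h" using lin_restr[OF sl2_lin(3)[OF MV] U(1)] U(3) by blast
qed (use sl2_rel[OF MV] U(1) in \<open>auto simp: subset_iff\<close>)

lemma rat_crit:
  assumes V: "ratm V" and U: "U \<subseteq> V" "subspace U" "\<And>v. v \<in> U \<Longrightarrow> e v \<in> U \<and> f v \<in> U \<and> h v \<in> U"
    "psurj U"
  shows "ratm U"
proof -
  have MV: "sl2_module smul V e f h" using ratmD(1)[OF V] .
  have MU: "sl2_module smul U e f h" using sl2_sub[OF MV U(1-3)] .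
  have hU: "lin smul U U h" using sl2_lin(3)[OF MU] .
  have bij: "bij_betw (pa p) U U" if p: "p \<noteq> 0" for p
  proof -
    have "inj_on (pa p) U"
    proof (rule inj_onI)
      fix x y assume "x \<in> U" "y \<in> U" "pa p x = pa p y"
      then show "x = y" using ratm_inj[OF V p, of x y] U(1) by blast
    qed
    moreover have "pa p ` U = U"
    proof
      show "pa p ` U \<subseteq> U" using polyact_in[OF hU U(2)] by blast
      show "U \<subseteq> pa p ` U"
      proof
        fix u assume "u \<in> U"
        then obtain w where "w \<in> U" "pa p w = u" using U(4) p unfolding psurj_def by blast
        then show "u \<in> pa p ` U" by blast
      qed
    qed
    ultimately show ?thesis by (simp add: bij_betw_def)
  qed
  have bU: "bnd U" using bnd_mono[OF bnd_ratm[OF V] U(1)] .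
  obtain T where T: "T \<subseteq> U" "pindep T" "card T = rk U" using rk_obt[OF bU] by blast
  have fT: "finite T" using T pindep_def by auto
  have hV: "lin smul V V h" using ratm_hlin[OF V] .
  have sV: "subspace V" using ratm_sub[OF V] .
  have span: "\<exists>p c. p \<noteq> 0 \<and> pa p v = (\<Sum>s\<in>T. pa (c s) s)" if v: "v \<in> U" for v
  proof (cases "v \<in> T")
    case True
    have "(\<Sum>s\<in>T. pa (if s = v then 1 else 0) s) = (\<Sum>s\<in>T. if s = v then s else 0)"
      by (intro sum.cong) (auto simp: polyact_one)
    also have "\<dots> = v" using True fT by simp
    finally show ?thesis by (intro exI[of _ 1] exI[of _ "\<lambda>s. if s = v then 1 else 0"]) (simp add: polyact_one)
  next
    case False
    have "\<not> pindep (insert v T)"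
    proof
      assume "pindep (insert v T)"
      then have "card (insert v T) \<le> rk U" using rk_ge[OF bU, of "insert v T"] T(1) v by simp
      then show False using T(3) fT False by simp
    qed
    then have "\<exists>c. (\<Sum>t\<in>insert v T. pa (c t) t) = 0 \<and> (\<exists>t\<in>insert v T. c t \<noteq> 0)"
      using fT unfolding pindep_def by simp
    then obtain c where c: "(\<Sum>t\<in>insert v T. pa (c t) t) = 0" "\<exists>t\<in>insert v T. c t \<noteq> 0"
      by blast
    then have s1: "pa (c v) v + (\<Sum>t\<in>T. pa (c t) t) = 0" using fT False by simp
    have cv: "c v \<noteq> 0"
    proof
      assume "c v = 0"
      then have "(\<Sum>t\<in>T. pa (c t) t) = 0" using s1 by simp
      then have "\<forall>t\<in>T. c t = 0" using T(2) unfolding pindep_def by simp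
      then show False using c(2) \<open>c v = 0\<close> by auto
    qed
    have "pa (c v) v = - (\<Sum>t\<in>T. pa (c t) t)" using s1 by (simp add: eq_neg_iff_add_eq_0)
    also have "\<dots> = (\<Sum>t\<in>T. pa (- c t) t)"
      by (simp add: polyact_neg_poly[OF hV sV] sum_negf)
    finally show ?thesis using cv by (intro exI[of _ "c v"] exI[of _ "\<lambda>t. - c t"]) simp
  qed
  show ?thesis unfolding rational_module_def
  proof (intro conjI allI impI)
    show "sl2_module smul U e f h" by fact
    show "bij_betw (pa p) U U" if "p \<noteq> 0" for p using bij[OF that] .
    show "\<exists>S. finite S \<and> S \<subseteq> U \<and> (\<forall>v\<in>U. \<exists>p c. p \<noteq> 0 \<and> pa p v = (\<Sum>s\<in>S. pa (c s) s))"
      using span fT T(1) by (intro exI[of _ T]) auto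
  qed
qed

lemma ratm_zero: assumes "sl2_module smul V e f h" shows "ratm {0}"
proof -
  have l: "lin smul V V e" "lin smul V V f" "lin smul V V h" "subspace V" using sl2_lin[OF assms] by auto
  have z: "e 0 = 0" "f 0 = 0" "h 0 = 0" using lin_zero l by blast+
  have z0: "0 \<in> V" using l(4) subspace_0 by blast
  have M: "sl2_module smul {0} e f h" unfolding sl2_module_def
  proof (intro conjI)
    show "subspace {0}" by simp
    show "\<forall>x\<in>{e, f, h}. (\<forall>v\<in>{0}. x v \<in> {0}) \<and> (\<forall>u\<in>{0}. \<forall>v\<in>{0}. x (u + v) = x u + x v) \<and>
         (\<forall>c. \<forall>v\<in>{0}. x (smul c v) = smul c (x v))" using z by simp
  qed (use z in simp)+
  have hh: "lin smul {0} {0} h" using sl2_lin[OF M] by blast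
  have pz: "pa p 0 = 0" for p using lin_zero[OF lin_polyact[OF hh subspace_single_0] subspace_single_0] .
  have b: "bij_betw (pa p) {0} {0}" for p using pz by (simp add: bij_betw_def)
  have sp: "\<forall>v\<in>{0}. \<exists>p c. p \<noteq> 0 \<and> pa p v = (\<Sum>s\<in>{}. pa (c s) s)"
    using pz by (intro ballI exI[of _ 1]) simp
  show ?thesis unfolding rational_module_def
    using M b sp by blast
qed

end


context sl2c
begin

abbreviation rsub where "rsub W V \<equiv> rational_submodule smul W V e f h"

lemma rsub_zero: assumes "ratm V" shows "rsub {0} V"
  unfolding rational_submodule_def
  using ratm_zero[OF ratmD(1)[OF assms]] subspace_0[OF ratm_sub[OF assms]] by simp

lemma rsub_self: "ratm V \<Longrightarrow> rsub V V"
  unfolding rational_submodule_def by simp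

lemma rsub_strict: assumes "ratm V" "rsub U V" "U' \<subseteq> V" "U \<subset> U'" shows "rk U < rk U'"
proof -
  have U: "ratm U" "U \<subseteq> V" using assms(2) unfolding rational_submodule_def by auto
  show ?thesis using rk_strict[OF assms(1), of U U'] assms(3,4) ratm_sub[OF U(1)] ratm_pcl[OF U(1)] ratm_psurj[OF U(1)]
    by auto
qed

lemma jh_aux:
  assumes V: "ratm V"
  shows "rsub W V \<Longrightarrow> \<exists>Vs n. Vs 0 = {0} \<and> Vs n = W \<and> (\<forall>i\<le>n. rsub (Vs i) V) \<and>
     (\<forall>i<n. Vs i \<subset> Vs (Suc i) \<and> \<not> (\<exists>U. rsub U V \<and> Vs i \<subset> U \<and> U \<subset> Vs (Suc i)))"
proof (induction "rk W" arbitrary: W rule: less_induct)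
  case less
  have WV: "W \<subseteq> V" "ratm W" using less.prems unfolding rational_submodule_def by auto
  show ?case
  proof (cases "W = {0}")
    case True
    show ?thesis
      by (rule exI[of _ "\<lambda>_. {0}"], rule exI[of _ 0]) (simp add: True rsub_zero[OF V])
  next
    case False
    have bV: "bnd V" using bnd_ratm[OF V] .
    define C where "C = {U. rsub U V \<and> U \<subset> W}"
    have z: "{0} \<in> C" unfolding C_def using rsub_zero[OF V] subspace_0[OF ratm_sub[OF WV(2)]] False by auto
    have finC: "finite (rk ` C)"
    proof (rule finite_subset)
      show "rk ` C \<subseteq> {..rk V}" unfolding C_def using rk_mono[OF bV] WV(1) by auto
    qed simp
    obtain U where U: "U \<in> C" "rk U = Max (rk ` C)"
      using Max_in[OF finC] z by (metis empty_iff image_iff)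
    have Uc: "rsub U V" "U \<subset> W" using U(1) unfolding C_def by auto
    have lt: "rk U < rk W" using rsub_strict[OF V Uc(1) WV(1) Uc(2)] .
    obtain Vs n where IH: "Vs 0 = {0}" "Vs n = U" "\<forall>i\<le>n. rsub (Vs i) V"
      "\<forall>i<n. Vs i \<subset> Vs (Suc i) \<and> \<not> (\<exists>U. rsub U V \<and> Vs i \<subset> U \<and> U \<subset> Vs (Suc i))"
      using less.hyps[OF lt Uc(1)] by blast
    have nomid: "\<not> (\<exists>U'. rsub U' V \<and> U \<subset> U' \<and> U' \<subset> W)"
    proof
      assume "\<exists>U'. rsub U' V \<and> U \<subset> U' \<and> U' \<subset> W"
      then obtain U' where U': "rsub U' V" "U \<subset> U'" "U' \<subset> W" by blast
      have "U' \<in> C" using U' unfolding C_def by simp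
      then have "rk U' \<le> rk U" using U(2) Max_ge[OF finC] by simp
      moreover have "rk U < rk U'" using rsub_strict[OF V Uc(1) _ U'(2)] U'(1) unfolding rational_submodule_def by simp
      ultimately show False by simp
    qed
    define Vs' where "Vs' = Vs(Suc n := W)"
    show ?thesis
    proof (intro exI[of _ Vs'] exI[of _ "Suc n"] conjI allI impI)
      show "Vs' 0 = {0}" using IH(1) by (simp add: Vs'_def)
      show "Vs' (Suc n) = W" by (simp add: Vs'_def)
      fix i
      show "i \<le> Suc n \<Longrightarrow> rsub (Vs' i) V" using IH(3) less.prems by (cases "i = Suc n") (auto simp: Vs'_def)
      assume i: "i < Suc n"
      show "Vs' i \<subset> Vs' (Suc i)"
        using IH(2,4) i Uc(2) by (cases "i = n") (auto simp: Vs'_def)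
      show "\<not> (\<exists>U. rsub U V \<and> Vs' i \<subset> U \<and> U \<subset> Vs' (Suc i))"
        using IH(2,4) i nomid by (cases "i = n") (auto simp: Vs'_def)
    qed
  qed
qed

lemma jh_exists: assumes "ratm V" shows "\<exists>Vs n. jordan_hoelder_filtration smul V e f h Vs n"
  using jh_aux[OF assms rsub_self[OF assms]] unfolding jordan_hoelder_filtration_def by blast

end


context sl2c
begin

abbreviation dsd where "dsd V Ws n \<equiv> direct_sum_decomp smul V e f h Ws n"
abbreviation hom where "hom A B \<phi> \<equiv> sl2_hom smul A B e f h \<phi>"

lemma rsubD: assumes "rsub W V" shows "W \<subseteq> V" "ratm W" "subspace W"
  using assms ratm_sub unfolding rational_submodule_def by auto

lemma ratm_cl: assumes "ratm W" "w \<in> W" shows "e w \<in> W" "f w \<in> W" "h w \<in> W"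
  using sl2_lin[OF ratmD(1)[OF assms(1)]] assms(2) unfolding lin_def by auto

lemma sum_2: "(\<Sum>i<2. g i) = g 0 + g (1::nat)"
  by (simp add: numeral_2_eq_2)

lemma dsdI:
  assumes R: "\<And>i. i < n \<Longrightarrow> rsub (Ws i) V"
    and S: "\<And>v. v \<in> V \<Longrightarrow> \<exists>w. (\<forall>i<n. w i \<in> Ws i) \<and> v = (\<Sum>i<n. w i)"
    and I: "\<And>w. (\<forall>i<n. w i \<in> Ws i) \<Longrightarrow> (\<Sum>i<n. w i) = 0 \<Longrightarrow> \<forall>i<n. w i = 0"
  shows "dsd V Ws n"
  unfolding direct_sum_decomp_def
proof (intro conjI allI impI ballI)
  fix i assume "i < n" then show "rsub (Ws i) V" by (rule R)
next
  fix v assume v: "v \<in> V"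
  obtain w where w: "\<forall>i<n. w i \<in> Ws i" "v = (\<Sum>i<n. w i)" using S[OF v] by blast
  define w' where "w' i = (if i < n then w i else 0)" for i
  have sw: "(\<Sum>i<n. w' i) = (\<Sum>i<n. w i)" by (intro sum.cong) (auto simp: w'_def)
  show "\<exists>!w. (\<forall>i<n. w i \<in> Ws i) \<and> (\<forall>i\<ge>n. w i = 0) \<and> v = (\<Sum>i<n. w i)"
  proof (rule ex1I[of _ w'])
    show "(\<forall>i<n. w' i \<in> Ws i) \<and> (\<forall>i\<ge>n. w' i = 0) \<and> v = (\<Sum>i<n. w' i)"
      using w sw by (auto simp: w'_def)
  next
    fix y assume y: "(\<forall>i<n. y i \<in> Ws i) \<and> (\<forall>i\<ge>n. y i = 0) \<and> v = (\<Sum>i<n. y i)"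
    define d where "d i = y i - w' i" for i
    have "\<forall>i<n. d i \<in> Ws i"
    proof (intro allI impI)
      fix i assume i: "i < n"
      have "y i - w i \<in> Ws i" using subspace_diff[OF rsubD(3)[OF R[OF i]]] y w i by simp
      then show "d i \<in> Ws i" using i by (simp add: d_def w'_def)
    qed
    moreover have "(\<Sum>i<n. d i) = 0" unfolding d_def sum_subtractf using y sw w(2) by simp
    ultimately have "\<forall>i<n. d i = 0" using I by blast
    then show "y = w'" using y by (auto simp: fun_eq_iff d_def w'_def not_less)
  qed
qed

lemma dsd_uniq: assumes "dsd V Ws n" "v \<in> V"
  shows "\<exists>!w. (\<forall>i<n. w i \<in> Ws i) \<and> (\<forall>i\<ge>n. w i = 0) \<and> v = (\<Sum>i<n. w i)"
proof -
  have "\<forall>v\<in>V. \<exists>!w. (\<forall>i<n. w i \<in> Ws i) \<and> (\<forall>i\<ge>n. w i = 0) \<and> v = (\<Sum>i<n. w i)"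
    using assms(1) unfolding direct_sum_decomp_def by (rule conjunct2)
  then show ?thesis using assms(2) by (rule bspec)
qed

lemma dsdD:
  assumes "dsd V Ws n"
  shows "\<And>i. i < n \<Longrightarrow> rsub (Ws i) V"
    "\<And>v. v \<in> V \<Longrightarrow> \<exists>w. (\<forall>i<n. w i \<in> Ws i) \<and> v = (\<Sum>i<n. w i)"
    "\<And>w. (\<forall>i<n. w i \<in> Ws i) \<Longrightarrow> (\<Sum>i<n. w i) = 0 \<Longrightarrow> \<forall>i<n. w i = 0"
proof -
  show R: "\<And>i. i < n \<Longrightarrow> rsub (Ws i) V" using assms unfolding direct_sum_decomp_def by auto
  fix v assume v: "v \<in> V"
  obtain w where "(\<forall>i<n. w i \<in> Ws i) \<and> (\<forall>i\<ge>n. w i = 0) \<and> v = (\<Sum>i<n. w i)"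
    using ex1_implies_ex[OF dsd_uniq[OF assms v]] by (elim exE)
  then show "\<exists>w. (\<forall>i<n. w i \<in> Ws i) \<and> v = (\<Sum>i<n. w i)" by auto
next
  fix w assume w: "\<forall>i<n. w i \<in> Ws i" "(\<Sum>i<n. w i) = 0"
  show "\<forall>i<n. w i = 0"
  proof (cases "n = 0")
    case False
    have R0: "rsub (Ws 0) V" using assms False unfolding direct_sum_decomp_def by auto
    have "0 \<in> Ws 0" using rsubD(3)[OF R0] subspace_0 by simp
    then have z: "0 \<in> V" by (rule subsetD[OF rsubD(1)[OF R0]])
    define w' where "w' i = (if i < n then w i else 0)" for i
    have u: "\<exists>!w. (\<forall>i<n. w i \<in> Ws i) \<and> (\<forall>i\<ge>n. w i = 0) \<and> 0 = (\<Sum>i<n. w i)"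
      using dsd_uniq[OF assms z] .
    have a: "(\<forall>i<n. w' i \<in> Ws i) \<and> (\<forall>i\<ge>n. w' i = 0) \<and> 0 = (\<Sum>i<n. w' i)"
      using w by (auto simp: w'_def)
    have b: "(\<forall>i<n. (\<lambda>_. 0) i \<in> Ws i) \<and> (\<forall>i\<ge>n. (\<lambda>_. 0) i = (0::'v)) \<and> 0 = (\<Sum>i<n. (\<lambda>_. 0::'v) i)"
    proof -
      have "\<forall>i<n. (0::'v) \<in> Ws i"
      proof (intro allI impI)
        fix i assume "i < n"
        then have "rsub (Ws i) V" using assms unfolding direct_sum_decomp_def by auto
        then show "(0::'v) \<in> Ws i" using rsubD(3) subspace_0 by simp
      qed
      then show ?thesis by simp
    qed
    have "w' = (\<lambda>_. 0)" using u a b by (elim ex1E) (metis (no_types, lifting))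
    then show ?thesis unfolding w'_def fun_eq_iff by (metis (full_types))
  qed simp
qed

definition comp :: "(nat \<Rightarrow> 'v set) \<Rightarrow> nat \<Rightarrow> 'v \<Rightarrow> nat \<Rightarrow> 'v" where
  "comp Ws n v = (THE w. (\<forall>i<n. w i \<in> Ws i) \<and> (\<forall>i\<ge>n. w i = 0) \<and> v = (\<Sum>i<n. w i))"

lemma comp_prop: assumes "dsd V Ws n" "v \<in> V"
  shows "(\<forall>i<n. comp Ws n v i \<in> Ws i) \<and> (\<forall>i\<ge>n. comp Ws n v i = 0) \<and> v = (\<Sum>i<n. comp Ws n v i)"
  using theI'[OF dsd_uniq[OF assms]] unfolding comp_def .

lemma comp_in: "dsd V Ws n \<Longrightarrow> v \<in> V \<Longrightarrow> i < n \<Longrightarrow> comp Ws n v i \<in> Ws i"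
  using comp_prop by blast

lemma comp_out: "dsd V Ws n \<Longrightarrow> v \<in> V \<Longrightarrow> n \<le> i \<Longrightarrow> comp Ws n v i = 0"
  using comp_prop by blast

lemma comp_sum: "dsd V Ws n \<Longrightarrow> v \<in> V \<Longrightarrow> v = (\<Sum>i<n. comp Ws n v i)"
  using comp_prop by blast

lemma comp_eq: assumes "dsd V Ws n" "v \<in> V" "\<forall>i<n. w i \<in> Ws i" "\<forall>i\<ge>n. w i = 0" "v = (\<Sum>i<n. w i)"
  shows "comp Ws n v = w"
  unfolding comp_def
  by (rule the1_equality[OF dsd_uniq[OF assms(1,2)]]) (use assms(3-5) in simp)

lemma comp_add: assumes D: "dsd V Ws n" and sV: "subspace V" and uv: "u \<in> V" "v \<in> V"
  shows "comp Ws n (u + v) = (\<lambda>i. comp Ws n u i + comp Ws n v i)"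
proof (rule comp_eq[OF D])
  show "u + v \<in> V" using subspace_add[OF sV uv] .
  show "\<forall>i<n. comp Ws n u i + comp Ws n v i \<in> Ws i"
  proof (intro allI impI)
    fix i assume i: "i < n"
    show "comp Ws n u i + comp Ws n v i \<in> Ws i"
      by (rule subspace_add[OF rsubD(3)[OF dsdD(1)[OF D i]] comp_in[OF D uv(1) i] comp_in[OF D uv(2) i]])
  qed
  show "\<forall>i\<ge>n. comp Ws n u i + comp Ws n v i = 0" using comp_out[OF D] uv by simp
  show "u + v = (\<Sum>i<n. comp Ws n u i + comp Ws n v i)"
    using comp_sum[OF D] uv by (simp add: sum.distrib)
qed

lemma comp_smul: assumes D: "dsd V Ws n" and sV: "subspace V" and v: "v \<in> V"
  shows "comp Ws n (smul c v) = (\<lambda>i. smul c (comp Ws n v i))"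
proof (rule comp_eq[OF D])
  show "smul c v \<in> V" using subspace_scale[OF sV v] .
  show "\<forall>i<n. smul c (comp Ws n v i) \<in> Ws i"
  proof (intro allI impI)
    fix i assume i: "i < n"
    show "smul c (comp Ws n v i) \<in> Ws i"
      by (rule subspace_scale[OF rsubD(3)[OF dsdD(1)[OF D i]] comp_in[OF D v i]])
  qed
  show "\<forall>i\<ge>n. smul c (comp Ws n v i) = 0" using comp_out[OF D v] by simp
  show "smul c v = (\<Sum>i<n. smul c (comp Ws n v i))"
    using comp_sum[OF D v] by (metis scale_sum_right)
qed

lemma comp_op: assumes D: "dsd V Ws n" and sV: "subspace V" and v: "v \<in> V" and x: "lin smul V V x"
  and cl: "\<And>i w. i < n \<Longrightarrow> w \<in> Ws i \<Longrightarrow> x w \<in> Ws i"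
  shows "comp Ws n (x v) = (\<lambda>i. x (comp Ws n v i))"
proof (rule comp_eq[OF D])
  show "x v \<in> V" using linD(1)[OF x v] .
  show "\<forall>i<n. x (comp Ws n v i) \<in> Ws i" using cl comp_in[OF D v] by simp
  show "\<forall>i\<ge>n. x (comp Ws n v i) = 0" using comp_out[OF D v] lin_zero[OF x sV] by simp
  have cV: "\<And>i. i < n \<Longrightarrow> comp Ws n v i \<in> V"
    using comp_in[OF D v] rsubD(1)[OF dsdD(1)[OF D]] by (meson subsetD)
  show "x v = (\<Sum>i<n. x (comp Ws n v i))"
    using lin_sum[OF x sV, of "{..<n}" "comp Ws n v"] cV comp_sum[OF D v] by simp
qed

lemma homI: assumes "lin smul A B \<phi>" "\<And>v. v \<in> A \<Longrightarrow> \<phi> (e v) = e (\<phi> v)"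
  "\<And>v. v \<in> A \<Longrightarrow> \<phi> (f v) = f (\<phi> v)" "\<And>v. v \<in> A \<Longrightarrow> \<phi> (h v) = h (\<phi> v)"
  shows "hom A B \<phi>"
  using assms unfolding sl2_hom_def lin_def by auto

lemma homD: assumes "hom A B \<phi>"
  shows "lin smul A B \<phi>" "\<And>v. v \<in> A \<Longrightarrow> \<phi> (e v) = e (\<phi> v)"
  "\<And>v. v \<in> A \<Longrightarrow> \<phi> (f v) = f (\<phi> v)" "\<And>v. v \<in> A \<Longrightarrow> \<phi> (h v) = h (\<phi> v)"
  using assms unfolding sl2_hom_def lin_def by auto

lemma hom_in: "hom A B \<phi> \<Longrightarrow> v \<in> A \<Longrightarrow> \<phi> v \<in> B"
  unfolding sl2_hom_def by auto

lemma comp_hom: assumes D: "dsd V Ws n" and V: "ratm V" and j: "j < n"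
  shows "hom V (Ws j) (\<lambda>v. comp Ws n v j)"
proof -
  have sV: "subspace V" using ratm_sub[OF V] .
  have L: "lin smul V V e" "lin smul V V f" "lin smul V V h"
    using sl2_lin[OF ratmD(1)[OF V]] by auto
  have R: "\<And>i. i < n \<Longrightarrow> ratm (Ws i)" using rsubD(2)[OF dsdD(1)[OF D]] .
  have ce: "\<And>i w. i < n \<Longrightarrow> w \<in> Ws i \<Longrightarrow> e w \<in> Ws i" using ratm_cl(1)[OF R] .
  have cf: "\<And>i w. i < n \<Longrightarrow> w \<in> Ws i \<Longrightarrow> f w \<in> Ws i" using ratm_cl(2)[OF R] .
  have ch: "\<And>i w. i < n \<Longrightarrow> w \<in> Ws i \<Longrightarrow> h w \<in> Ws i" using ratm_cl(3)[OF R] .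
  show ?thesis
  proof (rule homI)
    show "lin smul V (Ws j) (\<lambda>v. comp Ws n v j)"
      unfolding lin_def using comp_in[OF D _ j] comp_add[OF D sV] comp_smul[OF D sV] by simp
    show "v \<in> V \<Longrightarrow> comp Ws n (e v) j = e (comp Ws n v j)" for v
      using comp_op[OF D sV _ L(1) ce] by simp
    show "v \<in> V \<Longrightarrow> comp Ws n (f v) j = f (comp Ws n v j)" for v
      using comp_op[OF D sV _ L(2) cf] by simp
    show "v \<in> V \<Longrightarrow> comp Ws n (h v) j = h (comp Ws n v j)" for v
      using comp_op[OF D sV _ L(3) ch] by simp
  qed
qed

lemma comp_mem: assumes D: "dsd V Ws n" and j: "j < n" and w: "w \<in> Ws j"
  shows "comp Ws n w = (\<lambda>i. if i = j then w else 0)"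
proof (rule comp_eq[OF D])
  show "w \<in> V" using w rsubD(1)[OF dsdD(1)[OF D j]] by auto
  show "\<forall>i<n. (if i = j then w else 0) \<in> Ws i"
    using w rsubD(3)[OF dsdD(1)[OF D]] subspace_0 by auto
  show "\<forall>i\<ge>n. (if i = j then w else 0) = 0" using j by auto
  show "w = (\<Sum>i<n. if i = j then w else 0)" using j by simp
qed

lemma hom_comp: assumes "hom A B \<phi>" "hom B C \<psi>" shows "hom A C (\<psi> \<circ> \<phi>)"
proof (rule homI)
  show "lin smul A C (\<psi> \<circ> \<phi>)" by (rule lin_comp[OF homD(1)[OF assms(1)] homD(1)[OF assms(2)]])
qed (use assms homD hom_in in \<open>simp_all\<close>)

lemma hom_id: "hom A A (\<lambda>v. v)"
  unfolding sl2_hom_def by simp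

lemma hom_pow: assumes "hom A A \<phi>" shows "hom A A (\<phi> ^^ k)"
proof (induction k)
  case 0 then show ?case using hom_id by (simp add: id_def)
next
  case (Suc k) then show ?case using hom_comp[OF Suc assms] by (simp add: o_def)
qed

lemma hom_restr: assumes "hom A B \<phi>" "A' \<subseteq> A" "\<And>v. v \<in> A' \<Longrightarrow> \<phi> v \<in> B'"
  shows "hom A' B' \<phi>"
  using assms unfolding sl2_hom_def by (auto simp: subset_iff)

lemma hom_add: assumes "hom A B \<phi>" "hom A B \<psi>" "ratm B"
  shows "hom A B (\<lambda>v. \<phi> v + \<psi> v)"
proof -
  have sB: "subspace B" using ratm_sub[OF assms(3)] .
  have L: "lin smul B B e" "lin smul B B f" "lin smul B B h" using sl2_lin[OF ratmD(1)[OF assms(3)]] by auto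
  show ?thesis
  proof (rule homI)
    show "lin smul A B (\<lambda>v. \<phi> v + \<psi> v)"
      using homD(1)[OF assms(1)] homD(1)[OF assms(2)] sB unfolding lin_def
      by (auto simp: subspace_add scale_right_distrib algebra_simps)
  qed (use homD[OF assms(1)] homD[OF assms(2)] hom_in[OF assms(1)] hom_in[OF assms(2)] linD(2)[OF L(1)]
    linD(2)[OF L(2)] linD(2)[OF L(3)] in simp_all)
qed

lemma hom_zero: assumes "ratm B" shows "hom A B (\<lambda>v. 0)"
proof -
  have sB: "subspace B" using ratm_sub[OF assms] .
  have L: "lin smul B B e" "lin smul B B f" "lin smul B B h" using sl2_lin[OF ratmD(1)[OF assms]] by auto
  show ?thesis unfolding sl2_hom_def using lin_zero[OF L(1) sB] lin_zero[OF L(2) sB] lin_zero[OF L(3) sB]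
    subspace_0[OF sB] by simp
qed

lemma hom_sum: assumes "ratm B" "finite J" "\<And>j. j \<in> J \<Longrightarrow> hom A B (\<phi> j)"
  shows "hom A B (\<lambda>v. \<Sum>j\<in>J. \<phi> j v)"
  using assms(2,3)
proof (induction J rule: finite_induct)
  case empty then show ?case using hom_zero[OF assms(1)] by simp
next
  case (insert a J)
  then show ?case using hom_add[OF _ _ assms(1), of A "\<phi> a" "\<lambda>v. \<Sum>j\<in>J. \<phi> j v"] by simp
qed

lemma hom_pa: assumes "hom A B \<phi>" "ratm A" "ratm B" "v \<in> A"
  shows "\<phi> (pa p v) = pa p (\<phi> v)"
  by (rule polyact_hom[OF ratm_hlin[OF assms(2)] ratm_sub[OF assms(2)] ratm_hlin[OF assms(3)]
      ratm_sub[OF assms(3)] homD(1)[OF assms(1)] homD(4)[OF assms(1)] assms(4)])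

lemma dsd2I:
  assumes A: "rsub A W" and B: "rsub B W" and AB: "A \<inter> B \<subseteq> {0}"
    and sp: "\<And>x. x \<in> W \<Longrightarrow> \<exists>a\<in>A. \<exists>b\<in>B. x = a + b"
  shows "dsd W (\<lambda>i. if i = 0 then A else B) 2"
proof (rule dsdI)
  fix i :: nat assume "i < 2"
  then show "rsub (if i = 0 then A else B) W" using A B by auto
next
  fix v assume v: "v \<in> W"
  obtain a b where ab: "a \<in> A" "b \<in> B" "v = a + b" using sp[OF v] by blast
  show "\<exists>w. (\<forall>i<(2::nat). w i \<in> (if i = 0 then A else B)) \<and> v = (\<Sum>i<(2::nat). w i)"
  proof (intro exI[of _ "\<lambda>i::nat. if i = 0 then a else b"] conjI allI impI)
    fix i :: nat assume "i < 2"
    show "(if i = 0 then a else b) \<in> (if i = 0 then A else B)" using ab(1,2) by simp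
  next
    show "v = (\<Sum>i<(2::nat). if i = 0 then a else b)" using ab(3) by (simp add: sum_2)
  qed
next
  fix w assume w: "\<forall>i<(2::nat). w i \<in> (if i = 0 then A else B)" "(\<Sum>i<(2::nat). w i) = 0"
  have w0: "w 0 \<in> A" using spec[OF w(1), of 0] by simp
  have w1: "w 1 \<in> B" using spec[OF w(1), of 1] by simp
  have s: "w 0 + w 1 = 0" using w(2) unfolding sum_2 .
  have n: "w 0 = - w 1" using s by (rule eq_neg_iff_add_eq_0[THEN iffD2])
  have "w 0 \<in> B" unfolding n by (rule subspace_neg[OF rsubD(3)[OF B] w1])
  then have z0: "w 0 = 0" using AB w0 by blast
  then have z1: "w 1 = 0" using s by simp
  show "\<forall>i<(2::nat). w i = 0"
  proof (intro allI impI)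
    fix i :: nat assume "i < 2"
    then have "i = 0 \<or> i = 1" by arith
    then show "w i = 0" using z0 z1 by (elim disjE) simp_all
  qed
qed

lemma dsd2D:
  assumes D: "dsd W Ws 2"
  shows "rsub (Ws 0) W" "rsub (Ws 1) W" "Ws 0 \<inter> Ws 1 \<subseteq> {0}"
    "\<And>x. x \<in> W \<Longrightarrow> \<exists>a\<in>Ws 0. \<exists>b\<in>Ws 1. x = a + b"
proof -
  show R0: "rsub (Ws 0) W" by (rule dsdD(1)[OF D]) simp
  show R1: "rsub (Ws 1) W" by (rule dsdD(1)[OF D]) simp
  show "Ws 0 \<inter> Ws 1 \<subseteq> {0}"
  proof
    fix x assume x: "x \<in> Ws 0 \<inter> Ws 1"
    define w where "w i = (if i = 0 then x else if i = 1 then - x else 0)" for i :: nat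
    have "\<forall>i<(2::nat). w i \<in> Ws i"
    proof (intro allI impI)
      fix i :: nat assume "i < 2"
      then have "i = 0 \<or> i = 1" by arith
      moreover have "- x \<in> Ws 1" using subspace_neg[OF rsubD(3)[OF R1]] x by simp
      ultimately show "w i \<in> Ws i" using x unfolding w_def by (elim disjE) simp_all
    qed
    moreover have "(\<Sum>i<(2::nat). w i) = 0" unfolding sum_2 w_def by simp
    ultimately have "\<forall>i<(2::nat). w i = 0" by (rule dsdD(3)[OF D])
    then have "w 0 = 0" by simp
    then show "x \<in> {0}" by (simp add: w_def)
  qed
  fix x assume x: "x \<in> W"
  obtain w where w: "\<forall>i<(2::nat). w i \<in> Ws i" "x = (\<Sum>i<(2::nat). w i)" using dsdD(2)[OF D x] by blast
  have "w 0 \<in> Ws 0" "w 1 \<in> Ws 1" using spec[OF w(1), of 0] spec[OF w(1), of 1] by simp_all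
  moreover have "x = w 0 + w 1" using w(2) unfolding sum_2 .
  ultimately show "\<exists>a\<in>Ws 0. \<exists>b\<in>Ws 1. x = a + b" by blast
qed

lemma sum_lessThan_add_split: "(\<Sum>k<(a::nat) + b. g k) = (\<Sum>k<a. g k) + (\<Sum>j<b. g (a + j))"
  by (induction b) (auto simp: add.assoc)

lemma rsub_trans: "rsub A B \<Longrightarrow> rsub B C \<Longrightarrow> rsub A C"
  unfolding rational_submodule_def by auto

lemma dsd_concat:
  assumes D: "dsd W Ws 2" and DA: "dsd (Ws 0) As n1" and DB: "dsd (Ws 1) Bs n2"
  shows "dsd W (\<lambda>k. if k < n1 then As k else Bs (k - n1)) (n1 + n2)"
proof (rule dsdI)
  fix i assume "i < n1 + n2"
  then show "rsub (if i < n1 then As i else Bs (i - n1)) W"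
    using rsub_trans[OF dsdD(1)[OF DA] dsd2D(1)[OF D]] rsub_trans[OF dsdD(1)[OF DB] dsd2D(2)[OF D]] by auto
next
  fix v assume v: "v \<in> W"
  obtain a b where ab: "a \<in> Ws 0" "b \<in> Ws 1" "v = a + b" using dsd2D(4)[OF D v] by blast
  obtain \<alpha> where al: "\<forall>i<n1. \<alpha> i \<in> As i" "a = (\<Sum>i<n1. \<alpha> i)" using dsdD(2)[OF DA ab(1)] by (elim exE conjE) simp
  obtain \<beta> where be: "\<forall>i<n2. \<beta> i \<in> Bs i" "b = (\<Sum>i<n2. \<beta> i)" using dsdD(2)[OF DB ab(2)] by (elim exE conjE) simp
  define w where "w k = (if k < n1 then \<alpha> k else \<beta> (k - n1))" for k
  have "(\<Sum>k<n1 + n2. w k) = (\<Sum>k<n1. w k) + (\<Sum>j<n2. w (n1 + j))" by (rule sum_lessThan_add_split)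
  also have "(\<Sum>k<n1. w k) = a" using al(2) by (simp add: w_def)
  also have "(\<Sum>j<n2. w (n1 + j)) = b" using be(2) by (simp add: w_def)
  finally have "v = (\<Sum>k<n1 + n2. w k)" using ab(3) by simp
  moreover have "\<forall>i<n1 + n2. w i \<in> (if i < n1 then As i else Bs (i - n1))"
    using al(1) be(1) by (auto simp: w_def)
  ultimately show "\<exists>w. (\<forall>i<n1 + n2. w i \<in> (if i < n1 then As i else Bs (i - n1))) \<and> v = (\<Sum>i<n1 + n2. w i)"
    by (intro exI[of _ w]) simp
next
  fix w assume w: "\<forall>i<n1 + n2. w i \<in> (if i < n1 then As i else Bs (i - n1))" "(\<Sum>i<n1 + n2. w i) = 0"
  have wa: "\<forall>i<n1. w i \<in> As i"
  proof (intro allI impI)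
    fix i assume "i < n1"
    then show "w i \<in> As i" using spec[OF w(1), of i] by simp
  qed
  have wb: "\<forall>j<n2. w (n1 + j) \<in> Bs j"
  proof (intro allI impI)
    fix j assume "j < n2"
    then show "w (n1 + j) \<in> Bs j" using w(1) spec[OF w(1), of "n1 + j"] by simp
  qed
  have a0: "(\<Sum>i<n1. w i) \<in> Ws 0"
    using wa rsubD(1)[OF dsdD(1)[OF DA]] by (intro subspace_sum[OF rsubD(3)[OF dsd2D(1)[OF D]]]) auto
  have b0: "(\<Sum>j<n2. w (n1 + j)) \<in> Ws 1"
    using wb rsubD(1)[OF dsdD(1)[OF DB]] by (intro subspace_sum[OF rsubD(3)[OF dsd2D(2)[OF D]]]) auto
  have s: "(\<Sum>i<n1. w i) + (\<Sum>j<n2. w (n1 + j)) = 0" using w(2) sum_lessThan_add_split[of w n1 n2] by simp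
  then have "(\<Sum>i<n1. w i) = - (\<Sum>j<n2. w (n1 + j))" by (simp add: eq_neg_iff_add_eq_0)
  then have "(\<Sum>i<n1. w i) \<in> Ws 1" using subspace_neg[OF rsubD(3)[OF dsd2D(2)[OF D]] b0] by simp
  then have sa: "(\<Sum>i<n1. w i) = 0" using dsd2D(3)[OF D] a0 by auto
  then have sb: "(\<Sum>j<n2. w (n1 + j)) = 0" using s by simp
  have za: "\<forall>i<n1. w i = 0" using dsdD(3)[OF DA wa sa] .
  have zb: "\<forall>j<n2. w (n1 + j) = 0" using dsdD(3)[OF DB, of "\<lambda>j. w (n1 + j)"] wb sb by simp
  show "\<forall>i<n1 + n2. w i = 0"
  proof (intro allI impI)
    fix i assume i: "i < n1 + n2"
    show "w i = 0"
    proof (cases "i < n1")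
      case True then show ?thesis using za by simp
    next
      case False
      then have "i = n1 + (i - n1)" "i - n1 < n2" using i by auto
      then show ?thesis using zb by metis
    qed
  qed
qed

end


context sl2c
begin

lemma hom_zero_pt: assumes "hom W W g" "ratm W" shows "g 0 = 0"
  using lin_zero[OF homD(1)[OF assms(1)] ratm_sub[OF assms(2)]] .

lemma img_rat: assumes W: "ratm W" and g: "hom W W g"
  shows "rsub (g ` W) W"
proof -
  have sW: "subspace W" using ratm_sub[OF W] .
  have L: "lin smul W W g" using homD(1)[OF g] .
  have sub: "g ` W \<subseteq> W" using hom_in[OF g] by auto
  have ss: "subspace (g ` W)"
    unfolding subspace_def
  proof (intro conjI ballI allI)
    show "0 \<in> g ` W" using hom_zero_pt[OF g W] subspace_0[OF sW] by (metis image_eqI)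
  next
    fix x y assume "x \<in> g ` W" "y \<in> g ` W"
    then obtain a b where ab: "a \<in> W" "b \<in> W" "x = g a" "y = g b" by auto
    then have "x + y = g (a + b)" using linD(2)[OF L] by simp
    then show "x + y \<in> g ` W" using subspace_add[OF sW ab(1,2)] by simp
  next
    fix c x assume "x \<in> g ` W"
    then obtain a where a: "a \<in> W" "x = g a" by auto
    then have "smul c x = g (smul c a)" using linD(3)[OF L] by simp
    then show "smul c x \<in> g ` W" using subspace_scale[OF sW a(1)] by simp
  qed
  have cl: "e v \<in> g ` W \<and> f v \<in> g ` W \<and> h v \<in> g ` W" if v: "v \<in> g ` W" for v
  proof -
    obtain a where a: "a \<in> W" "v = g a" using v by auto
    have "e v = g (e a)" "f v = g (f a)" "h v = g (h a)" using homD(2-4)[OF g a(1)] a(2) by simp_all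
    then show ?thesis using ratm_cl[OF W a(1)] by simp
  qed
  have ps: "psurj (g ` W)"
    unfolding psurj_def
  proof (intro allI impI ballI)
    fix p :: "complex poly" and u assume p: "p \<noteq> 0" and u: "u \<in> g ` W"
    obtain a where a: "a \<in> W" "u = g a" using u by auto
    obtain w where w: "w \<in> W" "pa p w = a" using ratm_psurj[OF W] p a(1) unfolding psurj_def by blast
    have "u = g (pa p w)" using w(2) a(2) by simp
    also have "\<dots> = pa p (g w)" using hom_pa[OF g W W w(1)] .
    finally have "u = pa p (g w)" .
    then show "\<exists>w\<in>g ` W. pa p w = u" using w(1) by auto
  qed
  have "ratm (g ` W)" using rat_crit[OF W sub ss cl ps] .
  then show ?thesis unfolding rational_submodule_def using sub by simp
qed

lemma ker_rat: assumes W: "ratm W" and g: "hom W W g"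
  shows "rsub {v \<in> W. g v = 0} W"
proof -
  have sW: "subspace W" using ratm_sub[OF W] .
  have L: "lin smul W W g" using homD(1)[OF g] .
  have g0: "g 0 = 0" using hom_zero_pt[OF g W] .
  have sub: "{v \<in> W. g v = 0} \<subseteq> W" by auto
  have ss: "subspace {v \<in> W. g v = 0}"
    unfolding subspace_def using g0 subspace_0[OF sW] subspace_add[OF sW] subspace_scale[OF sW]
      linD(2,3)[OF L] by simp
  have LW: "lin smul W W e" "lin smul W W f" "lin smul W W h" using sl2_lin[OF ratmD(1)[OF W]] by auto
  have cl: "e v \<in> {v \<in> W. g v = 0} \<and> f v \<in> {v \<in> W. g v = 0} \<and> h v \<in> {v \<in> W. g v = 0}"
    if v: "v \<in> {v \<in> W. g v = 0}" for v
    using v homD(2-4)[OF g] ratm_cl[OF W] lin_zero[OF LW(1) sW] lin_zero[OF LW(2) sW] lin_zero[OF LW(3) sW]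
    by simp
  have ps: "psurj {v \<in> W. g v = 0}"
    unfolding psurj_def
  proof (intro allI impI ballI)
    fix p :: "complex poly" and u assume p: "p \<noteq> 0" and u: "u \<in> {v \<in> W. g v = 0}"
    obtain w where w: "w \<in> W" "pa p w = u" using ratm_psurj[OF W] p u unfolding psurj_def by blast
    have "pa p (g w) = g (pa p w)" using hom_pa[OF g W W w(1)] by simp
    also have "\<dots> = g u" using w(2) by simp
    also have "\<dots> = pa p 0" using u lin_zero[OF lin_polyact[OF ratm_hlin[OF W] sW] sW] by simp
    finally have "g w = 0" using ratm_inj[OF W p] hom_in[OF g w(1)] subspace_0[OF sW] by blast
    then show "\<exists>w\<in>{v \<in> W. g v = 0}. pa p w = u" using w by auto
  qed
  have "ratm {v \<in> W. g v = 0}" using rat_crit[OF W sub ss cl ps] .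
  then show ?thesis unfolding rational_submodule_def using sub by simp
qed

lemma funpow_in: "hom W W g \<Longrightarrow> v \<in> W \<Longrightarrow> (g ^^ k) v \<in> W"
  using hom_in[OF hom_pow] by blast

lemma fitting:
  assumes W: "ratm W" and g: "hom W W g"
  shows "\<exists>N. 1 \<le> N \<and> rsub {v \<in> W. (g ^^ N) v = 0} W \<and> rsub ((g ^^ N) ` W) W \<and>
     {v \<in> W. (g ^^ N) v = 0} \<inter> (g ^^ N) ` W \<subseteq> {0} \<and>
     (\<forall>x\<in>W. \<exists>a\<in>{v \<in> W. (g ^^ N) v = 0}. \<exists>b\<in>(g ^^ N) ` W. x = a + b) \<and>
     {v \<in> W. g v = 0} \<subseteq> {v \<in> W. (g ^^ N) v = 0} \<and> (g ^^ N) ` W \<subseteq> g ` W"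
proof -
  define KK where "KK k = {v \<in> W. (g ^^ k) v = 0}" for k
  define II where "II k = (g ^^ k) ` W" for k
  have sW: "subspace W" using ratm_sub[OF W] .
  have gk: "hom W W (g ^^ k)" for k using hom_pow[OF g] .
  have g0: "(g ^^ k) 0 = 0" for k using hom_zero_pt[OF gk W] .
  have Krs: "rsub (KK k) W" for k unfolding KK_def using ker_rat[OF W gk] .
  have Irs: "rsub (II k) W" for k unfolding II_def using img_rat[OF W gk] .
  have IIS: "II (Suc k) = g ` II k" for k unfolding II_def by (simp add: image_comp)
  have IIS': "II (Suc k) = (g ^^ k) ` (g ` W)" for k unfolding II_def
    by (simp add: image_comp funpow_Suc_right del: funpow.simps)
  have Idec: "II (Suc k) \<subseteq> II k" for k
  proof
    fix x assume "x \<in> II (Suc k)"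
    then obtain v where v: "v \<in> W" "x = (g ^^ Suc k) v" unfolding II_def by auto
    then have "x = (g ^^ k) (g v)" by (simp only: funpow_Suc_right o_apply)
    then show "x \<in> II k" unfolding II_def using hom_in[OF g v(1)] by simp
  qed
  have Kinc: "KK k \<subseteq> KK (Suc k)" for k
    unfolding KK_def using hom_zero_pt[OF g W] by auto
  have Idec2: "II (k + j) \<subseteq> II k" for k j
    by (induction j) (use Idec in auto)
  have Kinc2: "KK k \<subseteq> KK (k + j)" for k j
    by (induction j) (use Kinc in auto)
  have bW: "bnd W" using bnd_ratm[OF W] .
  have "\<exists>k. II (Suc k) = II k"
  proof (rule ccontr)
    assume "\<nexists>k. II (Suc k) = II k"
    then have lt: "rk (II (Suc k)) < rk (II k)" for k
      using rsub_strict[OF W Irs[of "Suc k"] rsubD(1)[OF Irs[of k]]] Idec[of k] by auto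
    have "rk (II k) + k \<le> rk (II 0)" for k
    proof (induction k)
      case (Suc k) then show ?case using lt[of k] by simp
    qed simp
    moreover have "rk (II 0) \<le> rk W" using rk_mono[OF bW rsubD(1)[OF Irs]] .
    ultimately show False using le_trans[of _ "rk (II 0)" "rk W"] by (metis add_leD2 not_less_eq_eq)
  qed
  then obtain k1 where k1: "II (Suc k1) = II k1" by blast
  have "\<exists>k. KK (Suc k) = KK k"
  proof (rule ccontr)
    assume "\<nexists>k. KK (Suc k) = KK k"
    then have lt: "rk (KK k) < rk (KK (Suc k))" for k
      using rsub_strict[OF W Krs[of k] rsubD(1)[OF Krs[of "Suc k"]]] Kinc[of k] by auto
    have "k \<le> rk (KK k)" for k
    proof (induction k)
      case (Suc k) then show ?case using lt[of k] by simp
    qed simp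
    moreover have "rk (KK k) \<le> rk W" for k using rk_mono[OF bW rsubD(1)[OF Krs]] .
    ultimately show False by (metis not_less_eq_eq le_trans)
  qed
  then obtain k2 where k2: "KK (Suc k2) = KK k2" by blast
  have Istab: "II (k1 + j) = II k1" for j
  proof (induction j)
    case (Suc j)
    have "II (k1 + Suc j) = g ` II (k1 + j)" using IIS by simp
    also have "\<dots> = II (Suc k1)" using Suc IIS by simp
    finally show ?case using k1 by simp
  qed simp
  have Kstab: "KK (k2 + j) = KK k2" for j
  proof (induction j)
    case (Suc j)
    have "KK (Suc (k2 + j)) \<subseteq> KK (k2 + j)"
    proof
      fix v assume v: "v \<in> KK (Suc (k2 + j))"
      then have vW: "v \<in> W" "(g ^^ (k2 + j)) (g v) = 0" unfolding KK_def
        by (simp_all add: funpow_Suc_right del: funpow.simps)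
      then have "g v \<in> KK (k2 + j)" unfolding KK_def using hom_in[OF g] by simp
      then have "g v \<in> KK k2" using Suc by simp
      then have "v \<in> KK (Suc k2)" using vW(1) unfolding KK_def
        by (simp add: funpow_Suc_right del: funpow.simps)
      then have "v \<in> KK k2" using k2 by simp
      then show "v \<in> KK (k2 + j)" using Kinc2 by auto
    qed
    then show ?case using Kinc[of "k2 + j"] Suc by simp
  qed simp
  define N where "N = k1 + k2 + 1"
  have N1: "1 \<le> N" unfolding N_def by simp
  have IN: "II (N + N) = II N"
    using Istab[of "k2 + 1"] Istab[of "k1 + k2 + 1 + k2 + 1"] unfolding N_def by (simp add: ac_simps)
  have KN: "KK (N + N) = KK N"
    using Kstab[of "k1 + 1"] Kstab[of "k1 + 1 + k1 + k2 + 1"] unfolding N_def by (simp add: ac_simps)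
  have gN: "hom W W (g ^^ N)" using gk .
  have LN: "lin smul W W (g ^^ N)" using homD(1)[OF gN] .
  have NN: "(g ^^ (N + N)) v = (g ^^ N) ((g ^^ N) v)" for v by (simp add: funpow_add)
  have disj: "KK N \<inter> II N \<subseteq> {0}"
  proof
    fix x assume x: "x \<in> KK N \<inter> II N"
    then obtain y where y: "y \<in> W" "x = (g ^^ N) y" unfolding II_def by auto
    have "(g ^^ (N + N)) y = 0" using x y NN unfolding KK_def by simp
    then have "y \<in> KK (N + N)" using y unfolding KK_def by simp
    then have "y \<in> KK N" using KN by simp
    then show "x \<in> {0}" using y unfolding KK_def by simp
  qed
  have span: "\<exists>a\<in>KK N. \<exists>b\<in>II N. x = a + b" if x: "x \<in> W" for x
  proof -
    have "(g ^^ N) x \<in> II (N + N)" using IN x unfolding II_def by simp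
    then obtain y where y: "y \<in> W" "(g ^^ N) x = (g ^^ N) ((g ^^ N) y)" unfolding II_def NN by auto
    have yW: "(g ^^ N) y \<in> W" using funpow_in[OF g y(1)] .
    have "(g ^^ N) (x - (g ^^ N) y) = 0" using lin_diff[OF LN sW x yW] y(2) by simp
    then have "x - (g ^^ N) y \<in> KK N" unfolding KK_def using subspace_diff[OF sW x yW] by simp
    moreover have "(g ^^ N) y \<in> II N" unfolding II_def using y(1) by simp
    ultimately show ?thesis by (intro bexI[of _ "x - (g ^^ N) y"] bexI[of _ "(g ^^ N) y"]) simp_all
  qed
  have K1: "KK 1 \<subseteq> KK N" using Kinc2[of 1 "N - 1"] N1 by simp
  have I1: "II N \<subseteq> II 1" using Idec2[of 1 "N - 1"] N1 by simp
  show ?thesis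
    using N1 Krs[of N] Irs[of N] disj span K1 I1 unfolding KK_def II_def by (intro exI[of _ N]) simp
qed

end


context sl2c
begin

abbreviation indec where "indec W \<equiv> indecomposable smul W e f h"

lemma indecD: assumes "indec W"
  shows "ratm W" "W \<noteq> {0}" "\<And>Ws. dsd W Ws 2 \<Longrightarrow> Ws 0 = {0} \<or> Ws 1 = {0}"
  using assms unfolding indecomposable_def by auto

lemma fit_dich: assumes I: "indec W" and g: "hom W W g"
  shows "bij_betw g W W \<or> (\<exists>N. \<forall>v\<in>W. (g ^^ N) v = 0)"
proof -
  have W: "ratm W" using indecD(1)[OF I] .
  have sW: "subspace W" using ratm_sub[OF W] .
  obtain N where N: "1 \<le> N" "rsub {v \<in> W. (g ^^ N) v = 0} W" "rsub ((g ^^ N) ` W) W"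
     "{v \<in> W. (g ^^ N) v = 0} \<inter> (g ^^ N) ` W \<subseteq> {0}"
     "\<forall>x\<in>W. \<exists>a\<in>{v \<in> W. (g ^^ N) v = 0}. \<exists>b\<in>(g ^^ N) ` W. x = a + b"
     "{v \<in> W. g v = 0} \<subseteq> {v \<in> W. (g ^^ N) v = 0}" "(g ^^ N) ` W \<subseteq> g ` W"
    using fitting[OF W g] by blast
  define A where "A = {v \<in> W. (g ^^ N) v = 0}"
  define B where "B = (g ^^ N) ` W"
  have D: "dsd W (\<lambda>i. if i = 0 then A else B) 2"
    using dsd2I[of A W B] N(2-5) unfolding A_def B_def by blast
  have "A = {0} \<or> B = {0}" using indecD(3)[OF I D] by simp
  then show ?thesis
  proof
    assume B0: "B = {0}"
    have "\<forall>v\<in>W. (g ^^ N) v = 0" using B0 unfolding B_def by auto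
    then show ?thesis by blast
  next
    assume A0: "A = {0}"
    have inj: "inj_on g W"
    proof (rule inj_onI)
      fix u v assume uv: "u \<in> W" "v \<in> W" "g u = g v"
      have "g (u - v) = 0" using lin_diff[OF homD(1)[OF g] sW uv(1,2)] uv(3) by simp
      then have "u - v \<in> A" using N(6) subspace_diff[OF sW uv(1,2)] unfolding A_def by auto
      then show "u = v" using A0 by simp
    qed
    have "g ` W = W"
    proof
      show "g ` W \<subseteq> W" using hom_in[OF g] by auto
      show "W \<subseteq> g ` W"
      proof
        fix x assume x: "x \<in> W"
        then obtain a b where ab: "a \<in> A" "b \<in> B" "x = a + b" using N(5) unfolding A_def B_def by blast
        then have "x = b" using A0 by simp
        then show "x \<in> g ` W" using ab(2) N(7) unfolding B_def by auto
      qed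
    qed
    then show ?thesis using inj unfolding bij_betw_def by simp
  qed
qed

lemma hom_inv: assumes W: "ratm W" and g: "hom W W g" and b: "bij_betw g W W"
  shows "hom W W (the_inv_into W g)"
    "\<And>v. v \<in> W \<Longrightarrow> g (the_inv_into W g v) = v"
    "\<And>v. v \<in> W \<Longrightarrow> the_inv_into W g (g v) = v"
    "\<And>v. v \<in> W \<Longrightarrow> the_inv_into W g v \<in> W"
proof -
  define a where "a = the_inv_into W g"
  have inj: "inj_on g W" and im: "g ` W = W" using b unfolding bij_betw_def by auto
  have ga: "\<And>v. v \<in> W \<Longrightarrow> g (a v) = v" unfolding a_def using f_the_inv_into_f[OF inj] im by simp
  have ag: "\<And>v. v \<in> W \<Longrightarrow> a (g v) = v" unfolding a_def using the_inv_into_f_f[OF inj] by simp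
  have aW: "\<And>v. v \<in> W \<Longrightarrow> a v \<in> W" unfolding a_def using the_inv_into_into[OF inj] im by simp
  show "\<And>v. v \<in> W \<Longrightarrow> g (the_inv_into W g v) = v" using ga unfolding a_def .
  show "\<And>v. v \<in> W \<Longrightarrow> the_inv_into W g (g v) = v" using ag unfolding a_def .
  show "\<And>v. v \<in> W \<Longrightarrow> the_inv_into W g v \<in> W" using aW unfolding a_def .
  have sW: "subspace W" using ratm_sub[OF W] .
  have L: "lin smul W W g" using homD(1)[OF g] .
  have "hom W W a"
  proof (rule homI)
    show "lin smul W W a"
      unfolding lin_def
    proof (intro conjI ballI allI)
      fix v assume "v \<in> W" then show "a v \<in> W" by (rule aW)
    next
      fix u v assume uv: "u \<in> W" "v \<in> W"
      have "g (a u + a v) = u + v" using linD(2)[OF L aW[OF uv(1)] aW[OF uv(2)]] ga uv by simp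
      then have "a (u + v) = a (g (a u + a v))" by simp
      then show "a (u + v) = a u + a v" using ag subspace_add[OF sW aW[OF uv(1)] aW[OF uv(2)]] by simp
    next
      fix c v assume v: "v \<in> W"
      have "g (smul c (a v)) = smul c v" using linD(3)[OF L aW[OF v]] ga v by simp
      then have "a (smul c v) = a (g (smul c (a v)))" by simp
      then show "a (smul c v) = smul c (a v)" using ag subspace_scale[OF sW aW[OF v]] by simp
    qed
    have LW: "lin smul W W e" "lin smul W W f" "lin smul W W h" using sl2_lin[OF ratmD(1)[OF W]] by auto
    show "a (e v) = e (a v)" if v: "v \<in> W" for v
    proof -
      have "g (e (a v)) = e v" using homD(2)[OF g aW[OF v]] ga[OF v] by simp
      then have "a (e v) = a (g (e (a v)))" by simp
      then show ?thesis using ag linD(1)[OF LW(1) aW[OF v]] by simp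
    qed
    show "a (f v) = f (a v)" if v: "v \<in> W" for v
    proof -
      have "g (f (a v)) = f v" using homD(3)[OF g aW[OF v]] ga[OF v] by simp
      then have "a (f v) = a (g (f (a v)))" by simp
      then show ?thesis using ag linD(1)[OF LW(2) aW[OF v]] by simp
    qed
    show "a (h v) = h (a v)" if v: "v \<in> W" for v
    proof -
      have "g (h (a v)) = h v" using homD(4)[OF g aW[OF v]] ga[OF v] by simp
      then have "a (h v) = a (g (h (a v)))" by simp
      then show ?thesis using ag linD(1)[OF LW(3) aW[OF v]] by simp
    qed
  qed
  then show "hom W W (the_inv_into W g)" unfolding a_def .
qed

lemma bij_cong_comp: assumes "bij_betw g W W" "bij_betw k W W" "\<And>v. v \<in> W \<Longrightarrow> p v = g (k v)"
  shows "bij_betw p W W"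
proof -
  have "bij_betw (g \<circ> k) W W" using bij_betw_trans[OF assms(2,1)] .
  then show ?thesis using bij_betw_cong[of W p "g \<circ> k" W] assms(3) by simp
qed

lemma nonzero_elem: assumes "ratm W" "W \<noteq> {0}" shows "\<exists>v\<in>W. v \<noteq> 0"
  using assms subspace_0[OF ratm_sub[OF assms(1)]] by blast

lemma indec_local: assumes I: "indec W"
  shows "local_endomorphism_ring smul W e f h"
  unfolding local_endomorphism_ring_def
proof (intro conjI allI impI)
  show "W \<noteq> {0}" using indecD(2)[OF I] .
  have W: "ratm W" using indecD(1)[OF I] .
  have sW: "subspace W" using ratm_sub[OF W] .
  fix \<phi> \<psi> assume a: "hom W W \<phi> \<and> hom W W \<psi> \<and> \<not> bij_betw \<phi> W W \<and> \<not> bij_betw \<psi> W W"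
  then have p: "hom W W \<phi>" and q: "hom W W \<psi>" and np: "\<not> bij_betw \<phi> W W" and nq: "\<not> bij_betw \<psi> W W" by auto
  show "\<not> bij_betw (\<lambda>v. \<phi> v + \<psi> v) W W"
  proof
    assume bc: "bij_betw (\<lambda>v. \<phi> v + \<psi> v) W W"
    define c where "c = (\<lambda>v. \<phi> v + \<psi> v)"
    have hc: "hom W W c" unfolding c_def using hom_add[OF p q W] .
    have bc': "bij_betw c W W" using bc unfolding c_def .
    define a where "a = the_inv_into W c"
    have ha: "hom W W a" and ca: "\<And>v. v \<in> W \<Longrightarrow> c (a v) = v" and ac: "\<And>v. v \<in> W \<Longrightarrow> a (c v) = v"
      and aW: "\<And>v. v \<in> W \<Longrightarrow> a v \<in> W"
      using hom_inv[OF W hc bc'] unfolding a_def by auto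
    define t where "t = a \<circ> \<phi>"
    define r where "r = a \<circ> \<psi>"
    have ht: "hom W W t" unfolding t_def by (rule hom_comp[OF p ha])
    have hr: "hom W W r" unfolding r_def by (rule hom_comp[OF q ha])
    have nt: "\<not> bij_betw t W W"
    proof
      assume "bij_betw t W W"
      then have "bij_betw \<phi> W W" using bij_cong_comp[OF bc'] ca hom_in[OF p] unfolding t_def by simp
      then show False using np by simp
    qed
    obtain N where N: "\<forall>v\<in>W. (t ^^ N) v = 0" using fit_dich[OF I ht] nt by blast
    have La: "lin smul W W a" using homD(1)[OF ha] .
    have tr: "t v + r v = v" if v: "v \<in> W" for v
    proof -
      have "a (c v) = v" using ac[OF v] .
      then show ?thesis using linD(2)[OF La hom_in[OF p v] hom_in[OF q v]] unfolding c_def t_def r_def by simp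
    qed
    have Lt: "lin smul W W t" using homD(1)[OF ht] .
    have Lr: "lin smul W W r" using homD(1)[OF hr] .
    have rinj0: "x = 0" if x: "x \<in> W" "r x = 0" for x
    proof -
      have tx: "t x = x" using tr[OF x(1)] x(2) by simp
      have "(t ^^ k) x = x" for k
      proof (induction k)
        case (Suc k) then show ?case using tx by simp
      qed simp
      then show ?thesis using N x(1) by metis
    qed
    have rinj: "inj_on r W"
    proof (rule inj_onI)
      fix u v assume uv: "u \<in> W" "v \<in> W" "r u = r v"
      have "r (u - v) = 0" using lin_diff[OF Lr sW uv(1,2)] uv(3) by simp
      then have "u - v = 0" using rinj0 subspace_diff[OF sW uv(1,2)] by blast
      then show "u = v" by simp
    qed
    have rb: "bij_betw r W W"
    proof -
      have "bij_betw r W W \<or> (\<exists>N. \<forall>v\<in>W. (r ^^ N) v = 0)" using fit_dich[OF I hr] .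
      moreover have "\<not> (\<exists>N. \<forall>v\<in>W. (r ^^ N) v = 0)"
      proof
        assume "\<exists>N. \<forall>v\<in>W. (r ^^ N) v = 0"
        then obtain M where M: "\<forall>v\<in>W. (r ^^ M) v = 0" by blast
        obtain v where v: "v \<in> W" "v \<noteq> 0" using nonzero_elem[OF W indecD(2)[OF I]] by blast
        have "x \<in> W \<Longrightarrow> (r ^^ k) x = 0 \<Longrightarrow> x = 0" for k x
        proof (induction k arbitrary: x)
          case 0 then show ?case by simp
        next
          case (Suc k)
          have "(r ^^ k) (r x) = 0" using Suc.prems(2) by (simp only: funpow_Suc_right o_apply)
          then have "r x = 0" using Suc.IH hom_in[OF hr Suc.prems(1)] by blast
          then show ?case using rinj0 Suc.prems(1) by blast
        qed
        then show False using M v by blast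
      qed
      ultimately show ?thesis by blast
    qed
    have "bij_betw \<psi> W W" using bij_cong_comp[OF bc' rb] ca hom_in[OF q] unfolding r_def by simp
    then show False using nq by simp
  qed
qed

end


context sl2c
begin

lemma dsd_zero: assumes "ratm W" "W = {0}" shows "dsd W Ws 0"
  by (rule dsdI) (use assms in auto)

lemma dsd_one: assumes "ratm W" shows "dsd W (\<lambda>_. W) 1"
proof (rule dsdI)
  show "\<And>i. i < 1 \<Longrightarrow> rsub W W" using rsub_self[OF assms] by simp
  show "\<exists>w. (\<forall>i<(1::nat). w i \<in> W) \<and> v = (\<Sum>i<(1::nat). w i)" if "v \<in> W" for v
    using that by (intro exI[of _ "\<lambda>_. v"]) (simp add: lessThan_Suc)
  show "\<forall>i<(1::nat). w i = 0" if "\<forall>i<(1::nat). w i \<in> W" "(\<Sum>i<(1::nat). w i) = 0" for w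
    using that by (simp add: lessThan_Suc)
qed

lemma proper_summand: assumes D: "dsd W Ws 2" and B: "Ws 1 \<noteq> {0}" shows "Ws 0 \<subset> W"
proof -
  have R1: "rsub (Ws 1) W" using dsd2D(2)[OF D] .
  obtain b where b: "b \<in> Ws 1" "b \<noteq> 0" using nonzero_elem[OF rsubD(2)[OF R1] B] by blast
  have "b \<in> W" using b(1) rsubD(1)[OF R1] by auto
  moreover have "b \<notin> Ws 0" using dsd2D(3)[OF D] b by auto
  ultimately show ?thesis using rsubD(1)[OF dsd2D(1)[OF D]] by auto
qed

lemma dsd_swap2: assumes D: "dsd W Ws 2" shows "dsd W (\<lambda>i. if i = 0 then Ws 1 else Ws 0) 2"
proof (rule dsd2I)
  show "rsub (Ws 1) W" "rsub (Ws 0) W" using dsd2D(1,2)[OF D] by simp_all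
  show "Ws 1 \<inter> Ws 0 \<subseteq> {0}" using dsd2D(3)[OF D] by auto
  show "\<exists>a\<in>Ws 1. \<exists>b\<in>Ws 0. x = a + b" if "x \<in> W" for x
    using dsd2D(4)[OF D that] by (metis add.commute)
qed

lemma decomp_exists:
  assumes "ratm W" shows "\<exists>Ws n. dsd W Ws n \<and> (\<forall>i<n. indec (Ws i))"
  using assms
proof (induction "rk W" arbitrary: W rule: less_induct)
  case less
  have W: "ratm W" by fact
  show ?case
  proof (cases "W = {0}")
    case True
    then show ?thesis using dsd_zero[OF W True] by blast
  next
    case False
    show ?thesis
    proof (cases "indec W")
      case True
      then show ?thesis using dsd_one[OF W] by (intro exI[of _ "\<lambda>_. W"] exI[of _ 1]) simp
    next
      case nI: False
      then obtain Ws where D: "dsd W Ws 2" "Ws 0 \<noteq> {0}" "Ws 1 \<noteq> {0}"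
        using W False unfolding indecomposable_def by blast
      have D': "dsd W (\<lambda>i. if i = 0 then Ws 1 else Ws 0) 2" using dsd_swap2[OF D(1)] .
      have p0: "Ws 0 \<subset> W" using proper_summand[OF D(1,3)] .
      have p1: "Ws 1 \<subset> W" using proper_summand[OF D' ] D(2) by simp
      have r0: "rk (Ws 0) < rk W" using rsub_strict[OF W dsd2D(1)[OF D(1)] _ p0] by simp
      have r1: "rk (Ws 1) < rk W" using rsub_strict[OF W dsd2D(2)[OF D(1)] _ p1] by simp
      obtain As n1 where A: "dsd (Ws 0) As n1" "\<forall>i<n1. indec (As i)"
        using less.hyps[OF r0 rsubD(2)[OF dsd2D(1)[OF D(1)]]] by blast
      obtain Bs n2 where B: "dsd (Ws 1) Bs n2" "\<forall>i<n2. indec (Bs i)"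
        using less.hyps[OF r1 rsubD(2)[OF dsd2D(2)[OF D(1)]]] by blast
      have "dsd W (\<lambda>k. if k < n1 then As k else Bs (k - n1)) (n1 + n2)"
        using dsd_concat[OF D(1) A(1) B(1)] .
      moreover have "\<forall>i<n1 + n2. indec (if i < n1 then As i else Bs (i - n1))"
        using A(2) B(2) by auto
      ultimately show ?thesis by blast
    qed
  qed
qed

end


context sl2c
begin

lemma hom_inv2: assumes V: "ratm V" and V': "ratm V'" and g: "hom V V' g" and b: "bij_betw g V V'"
  shows "hom V' V (the_inv_into V g)"
    "\<And>v. v \<in> V' \<Longrightarrow> g (the_inv_into V g v) = v"
    "\<And>v. v \<in> V \<Longrightarrow> the_inv_into V g (g v) = v"
    "\<And>v. v \<in> V' \<Longrightarrow> the_inv_into V g v \<in> V"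
proof -
  define a where "a = the_inv_into V g"
  have inj: "inj_on g V" and im: "g ` V = V'" using b unfolding bij_betw_def by auto
  have ga: "\<And>v. v \<in> V' \<Longrightarrow> g (a v) = v" unfolding a_def using f_the_inv_into_f[OF inj] im by simp
  have ag: "\<And>v. v \<in> V \<Longrightarrow> a (g v) = v" unfolding a_def using the_inv_into_f_f[OF inj] by simp
  have aW: "\<And>v. v \<in> V' \<Longrightarrow> a v \<in> V" unfolding a_def using the_inv_into_into[OF inj] im by simp
  show "\<And>v. v \<in> V' \<Longrightarrow> g (the_inv_into V g v) = v" using ga unfolding a_def .
  show "\<And>v. v \<in> V \<Longrightarrow> the_inv_into V g (g v) = v" using ag unfolding a_def .
  show "\<And>v. v \<in> V' \<Longrightarrow> the_inv_into V g v \<in> V" using aW unfolding a_def .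
  have sW: "subspace V" using ratm_sub[OF V] .
  have L: "lin smul V V' g" using homD(1)[OF g] .
  have "hom V' V a"
  proof (rule homI)
    show "lin smul V' V a"
      unfolding lin_def
    proof (intro conjI ballI allI)
      fix v assume "v \<in> V'" then show "a v \<in> V" by (rule aW)
    next
      fix u v assume uv: "u \<in> V'" "v \<in> V'"
      have "g (a u + a v) = u + v" using linD(2)[OF L aW[OF uv(1)] aW[OF uv(2)]] ga uv by simp
      then have "a (u + v) = a (g (a u + a v))" by simp
      then show "a (u + v) = a u + a v" using ag subspace_add[OF sW aW[OF uv(1)] aW[OF uv(2)]] by simp
    next
      fix c v assume v: "v \<in> V'"
      have "g (smul c (a v)) = smul c v" using linD(3)[OF L aW[OF v]] ga v by simp
      then have "a (smul c v) = a (g (smul c (a v)))" by simp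
      then show "a (smul c v) = smul c (a v)" using ag subspace_scale[OF sW aW[OF v]] by simp
    qed
    have LW: "lin smul V V e" "lin smul V V f" "lin smul V V h" using sl2_lin[OF ratmD(1)[OF V]] by auto
    show "a (e v) = e (a v)" if v: "v \<in> V'" for v
    proof -
      have "g (e (a v)) = e v" using homD(2)[OF g aW[OF v]] ga[OF v] by simp
      then have "a (e v) = a (g (e (a v)))" by simp
      then show ?thesis using ag linD(1)[OF LW(1) aW[OF v]] by simp
    qed
    show "a (f v) = f (a v)" if v: "v \<in> V'" for v
    proof -
      have "g (f (a v)) = f v" using homD(3)[OF g aW[OF v]] ga[OF v] by simp
      then have "a (f v) = a (g (f (a v)))" by simp
      then show ?thesis using ag linD(1)[OF LW(2) aW[OF v]] by simp
    qed
    show "a (h v) = h (a v)" if v: "v \<in> V'" for v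
    proof -
      have "g (h (a v)) = h v" using homD(4)[OF g aW[OF v]] ga[OF v] by simp
      then have "a (h v) = a (g (h (a v)))" by simp
      then show ?thesis using ag linD(1)[OF LW(3) aW[OF v]] by simp
    qed
  qed
  then show "hom V' V (the_inv_into V g)" unfolding a_def .
qed

lemma hom_diff: assumes "hom A B \<phi>" "hom A B \<psi>" "ratm B"
  shows "hom A B (\<lambda>v. \<phi> v - \<psi> v)"
proof -
  have sB: "subspace B" using ratm_sub[OF assms(3)] .
  have L: "lin smul B B e" "lin smul B B f" "lin smul B B h" using sl2_lin[OF ratmD(1)[OF assms(3)]] by auto
  show ?thesis
  proof (rule homI)
    show "lin smul A B (\<lambda>v. \<phi> v - \<psi> v)"
      using homD(1)[OF assms(1)] homD(1)[OF assms(2)] sB unfolding lin_def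
      by (auto simp: subspace_diff scale_right_diff_distrib algebra_simps)
  qed (use homD[OF assms(1)] homD[OF assms(2)] hom_in[OF assms(1)] hom_in[OF assms(2)] lin_diff[OF L(1) sB]
    lin_diff[OF L(2) sB] lin_diff[OF L(3) sB] in simp_all)
qed

lemma local_sum:
  assumes Lc: "local_endomorphism_ring smul W e f h" and W: "ratm W" and fin: "finite J"
    and g: "\<And>j. j \<in> J \<Longrightarrow> hom W W (g j) \<and> \<not> bij_betw (g j) W W"
  shows "\<not> bij_betw (\<lambda>v. \<Sum>j\<in>J. g j v) W W"
  using fin g
proof (induction J rule: finite_induct)
  case empty
  have "W \<noteq> {0}" using Lc unfolding local_endomorphism_ring_def by simp
  then obtain v where v: "v \<in> W" "v \<noteq> 0" using nonzero_elem[OF W] by blast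
  have z: "0 \<in> W" using subspace_0[OF ratm_sub[OF W]] .
  show ?case
  proof
    assume "bij_betw (\<lambda>v. \<Sum>j\<in>{}. g j v) W W"
    then have "inj_on (\<lambda>v. 0::'v) W" unfolding bij_betw_def by simp
    then show False using v z unfolding inj_on_def by blast
  qed
next
  case (insert a J)
  have ha: "hom W W (g a)" "\<not> bij_betw (g a) W W" using insert.prems by auto
  have hs: "hom W W (\<lambda>v. \<Sum>j\<in>J. g j v)" using hom_sum[OF W insert.hyps(1)] insert.prems by blast
  have ns: "\<not> bij_betw (\<lambda>v. \<Sum>j\<in>J. g j v) W W" using insert.IH insert.prems by blast
  have "\<not> bij_betw (\<lambda>v. g a v + (\<Sum>j\<in>J. g j v)) W W"
    using Lc ha hs ns unfolding local_endomorphism_ring_def by blast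
  then show ?case using insert.hyps by simp
qed

lemma dsd_perm: assumes D: "dsd V Us m" and t: "t permutes {..<m}"
  shows "dsd V (\<lambda>i. Us (t i)) m"
proof (rule dsdI)
  fix i assume "i < m"
  then have "t i < m" using permutes_in_image[OF t] by simp
  then show "rsub (Us (t i)) V" using dsdD(1)[OF D] by simp
next
  fix v assume v: "v \<in> V"
  obtain w where w: "\<forall>i<m. w i \<in> Us i" "v = (\<Sum>i<m. w i)" using dsdD(2)[OF D v] by blast
  have "(\<Sum>i<m. w i) = (\<Sum>i<m. w (t i))" using sum.permute[OF t, of w] by (simp add: o_def)
  moreover have "\<forall>i<m. w (t i) \<in> Us (t i)" using w(1) permutes_in_image[OF t] by simp
  ultimately show "\<exists>w. (\<forall>i<m. w i \<in> Us (t i)) \<and> v = (\<Sum>i<m. w i)" using w(2)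
    by (intro exI[of _ "\<lambda>i. w (t i)"]) simp
next
  fix w assume w: "\<forall>i<m. w i \<in> Us (t i)" "(\<Sum>i<m. w i) = 0"
  define w' where "w' j = w (inv t j)" for j
  have w'1: "\<forall>j<m. w' j \<in> Us j"
  proof (intro allI impI)
    fix j assume j: "j < m"
    have "inv t j < m" using permutes_in_image[OF permutes_inv[OF t]] j by simp
    then show "w' j \<in> Us j" using w(1) permutes_inverses(1)[OF t, of j] unfolding w'_def by metis
  qed
  have "(\<Sum>j<m. w' j) = (\<Sum>i<m. w' (t i))" using sum.permute[OF t, of w'] by (simp add: o_def)
  also have "\<dots> = (\<Sum>i<m. w i)" unfolding w'_def using permutes_inverses(2)[OF t] by simp
  finally have "(\<Sum>j<m. w' j) = 0" using w(2) by simp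
  then have z: "\<forall>j<m. w' j = 0" using dsdD(3)[OF D w'1] by simp
  show "\<forall>i<m. w i = 0"
  proof (intro allI impI)
    fix i assume "i < m"
    then have "t i < m" using permutes_in_image[OF t] by simp
    then have "w' (t i) = 0" using z by simp
    then show "w i = 0" unfolding w'_def using permutes_inverses(2)[OF t] by simp
  qed
qed

lemma comp_perm: assumes D: "dsd V Us m" and t: "t permutes {..<m}" and v: "v \<in> V"
  shows "comp (\<lambda>i. Us (t i)) m v = (\<lambda>i. comp Us m v (t i))"
proof (rule comp_eq[OF dsd_perm[OF D t] v])
  show "\<forall>i<m. comp Us m v (t i) \<in> Us (t i)" using comp_in[OF D v] permutes_in_image[OF t] by simp
  show "\<forall>i\<ge>m. comp Us m v (t i) = 0" using permutes_not_in[OF t] comp_out[OF D v] by simp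
  show "v = (\<Sum>i<m. comp Us m v (t i))" using comp_sum[OF D v] sum.permute[OF t, of "comp Us m v"]
    by (simp add: o_def)
qed

lemma dsd_tail: assumes D: "dsd V Ws (Suc n)" and V: "ratm V"
  shows "dsd {v \<in> V. comp Ws (Suc n) v 0 = 0} (\<lambda>i. Ws (Suc i)) n"
proof (rule dsdI)
  fix i assume i: "i < n"
  have R: "rsub (Ws (Suc i)) V" using dsdD(1)[OF D] i by simp
  have "Ws (Suc i) \<subseteq> {v \<in> V. comp Ws (Suc n) v 0 = 0}"
  proof
    fix w assume w: "w \<in> Ws (Suc i)"
    have "comp Ws (Suc n) w = (\<lambda>k. if k = Suc i then w else 0)" using comp_mem[OF D _ w] i by simp
    then show "w \<in> {v \<in> V. comp Ws (Suc n) v 0 = 0}" using w rsubD(1)[OF R] by auto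
  qed
  then show "rsub (Ws (Suc i)) {v \<in> V. comp Ws (Suc n) v 0 = 0}"
    using rsubD(2)[OF R] unfolding rational_submodule_def by simp
next
  fix v assume v: "v \<in> {v \<in> V. comp Ws (Suc n) v 0 = 0}"
  have "v = (\<Sum>i<Suc n. comp Ws (Suc n) v i)" using comp_sum[OF D] v by simp
  also have "\<dots> = comp Ws (Suc n) v 0 + (\<Sum>i<n. comp Ws (Suc n) v (Suc i))" by (rule sum.lessThan_Suc_shift)
  finally have "v = (\<Sum>i<n. comp Ws (Suc n) v (Suc i))" using v by simp
  moreover have "\<forall>i<n. comp Ws (Suc n) v (Suc i) \<in> Ws (Suc i)" using comp_in[OF D] v by simp
  ultimately show "\<exists>w. (\<forall>i<n. w i \<in> Ws (Suc i)) \<and> v = (\<Sum>i<n. w i)"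
    by (intro exI[of _ "\<lambda>i. comp Ws (Suc n) v (Suc i)"]) simp
next
  fix w assume w: "\<forall>i<n. w i \<in> Ws (Suc i)" "(\<Sum>i<n. w i) = 0"
  define w' where "w' k = (if k = 0 then 0 else w (k - 1))" for k
  have z0: "0 \<in> Ws 0" using rsubD(3)[OF dsdD(1)[OF D]] subspace_0 by simp
  have w'1: "\<forall>k<Suc n. w' k \<in> Ws k"
  proof (intro allI impI)
    fix k assume k: "k < Suc n"
    show "w' k \<in> Ws k"
    proof (cases k)
      case 0 then show ?thesis using z0 by (simp add: w'_def)
    next
      case (Suc i) then show ?thesis using k spec[OF w(1), of i] by (simp add: w'_def)
    qed
  qed
  have "(\<Sum>k<Suc n. w' k) = w' 0 + (\<Sum>i<n. w' (Suc i))" by (rule sum.lessThan_Suc_shift)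
  also have "\<dots> = 0" using w(2) by (simp add: w'_def)
  finally have "\<forall>k<Suc n. w' k = 0" by (rule dsdD(3)[OF D w'1])
  show "\<forall>i<n. w i = 0"
  proof (intro allI impI)
    fix i assume "i < n"
    then have "w' (Suc i) = 0" using \<open>\<forall>k<Suc n. w' k = 0\<close> by simp
    then show "w i = 0" by (simp add: w'_def)
  qed
qed

lemma perm_shift: assumes s: "s permutes {..<k}"
  shows "(\<lambda>i. if i = 0 then 0 else Suc (s (i - 1))) permutes {..<Suc k}"
proof (rule bij_imp_permutes)
  define t where "t = (\<lambda>i. if i = 0 then 0 else Suc (s (i - 1)))"
  show "\<And>x. x \<notin> {..<Suc k} \<Longrightarrow> (\<lambda>i. if i = 0 then 0 else Suc (s (i - 1))) x = x"
    using permutes_not_in[OF s] by auto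
  have inj: "inj_on t {..<Suc k}"
  proof (rule inj_onI)
    fix x y assume xy: "x \<in> {..<Suc k}" "y \<in> {..<Suc k}" "t x = t y"
    show "x = y"
    proof (cases "x = 0")
      case True then show ?thesis using xy by (cases "y = 0") (auto simp: t_def)
    next
      case False
      then have "y \<noteq> 0" using xy by (auto simp: t_def split: if_splits)
      then have "s (x - 1) = s (y - 1)" using xy False by (simp add: t_def)
      then have "x - 1 = y - 1" using permutes_inj[OF s] unfolding inj_def by blast
      then show ?thesis using False \<open>y \<noteq> 0\<close> by simp
    qed
  qed
  have im: "t ` {..<Suc k} \<subseteq> {..<Suc k}"
  proof
    fix y assume "y \<in> t ` {..<Suc k}"
    then obtain x where x: "x < Suc k" "y = t x" by auto
    show "y \<in> {..<Suc k}"
    proof (cases "x = 0")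
      case False
      then have "x - 1 < k" using x by simp
      then have "s (x - 1) < k" using permutes_in_image[OF s] by simp
      then show ?thesis using x False by (simp add: t_def)
    qed (use x in \<open>simp add: t_def\<close>)
  qed
  have "card (t ` {..<Suc k}) = card {..<Suc k}" using card_image[OF inj] .
  then have "t ` {..<Suc k} = {..<Suc k}" using im by (simp add: card_subset_eq)
  then show "bij_betw (\<lambda>i. if i = 0 then 0 else Suc (s (i - 1))) {..<Suc k} {..<Suc k}"
    using inj unfolding bij_betw_def t_def by simp
qed

end


context sl2c
begin

abbreviation iso where "iso W U \<equiv> sl2_iso smul W U e f h"

lemma ks_step:
  assumes IH: "\<And>V V' \<Phi> Ws Us m. ratm V \<Longrightarrow> ratm V' \<Longrightarrow> hom V V' \<Phi> \<Longrightarrow> bij_betw \<Phi> V V' \<Longrightarrow>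
      dsd V Ws n \<Longrightarrow> (\<forall>i<n. indec (Ws i)) \<Longrightarrow> dsd V' Us m \<Longrightarrow> (\<forall>j<m. indec (Us j)) \<Longrightarrow>
      n = m \<and> (\<exists>\<sigma>. \<sigma> permutes {..<n} \<and> (\<forall>i<n. iso (Ws i) (Us (\<sigma> i))))"
    and V: "ratm V" and V': "ratm V'" and Phi: "hom V V' \<Phi>" and bPhi: "bij_betw \<Phi> V V'"
    and D: "dsd V Ws (Suc n)" and IW: "\<forall>i<Suc n. indec (Ws i)"
    and D': "dsd V' Us m" and IU: "\<forall>j<m. indec (Us j)" and m0: "0 < m"
    and tb: "bij_betw (\<lambda>w. comp Ws (Suc n) (the_inv_into V \<Phi> (comp Us m (\<Phi> w) 0)) 0) (Ws 0) (Ws 0)"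
  shows "Suc n = m \<and> (\<exists>\<sigma>. \<sigma> permutes {..<Suc n} \<and> (\<forall>i<Suc n. iso (Ws i) (Us (\<sigma> i))))"
proof -
  obtain m' where mm: "m = Suc m'" using m0 by (cases m) auto
  define A where "A = Ws 0"
  define B where "B = Us 0"
  define Psi where "Psi = the_inv_into V \<Phi>"
  define p0 where "p0 v = comp Ws (Suc n) v 0" for v
  define q0 where "q0 u = comp Us m u 0" for u
  have RA: "rsub A V" unfolding A_def using dsdD(1)[OF D] by simp
  have RB: "rsub B V'" unfolding B_def using dsdD(1)[OF D'] m0 by simp
  have rA: "ratm A" and rB: "ratm B" using rsubD(2)[OF RA] rsubD(2)[OF RB] .
  have AV: "A \<subseteq> V" and BV: "B \<subseteq> V'" using rsubD(1)[OF RA] rsubD(1)[OF RB] .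
  have iA: "indec A" unfolding A_def using IW by simp
  have iB: "indec B" unfolding B_def using IU m0 by simp
  have sV: "subspace V" and sV': "subspace V'" using ratm_sub[OF V] ratm_sub[OF V'] .
  have hp0: "hom V A p0" unfolding p0_def A_def using comp_hom[OF D V] by simp
  have hq0: "hom V' B q0" unfolding q0_def B_def using comp_hom[OF D' V' m0] .
  have hp0': "hom V V p0" using hom_restr[OF hp0 order_refl] AV by (meson subsetD hom_in[OF hp0])
  have hq0': "hom V' V' q0" using hom_restr[OF hq0 order_refl] BV by (meson subsetD hom_in[OF hq0])
  have hPsi: "hom V' V Psi" and PhiPsi: "\<And>v. v \<in> V' \<Longrightarrow> \<Phi> (Psi v) = v"
    and PsiPhi: "\<And>v. v \<in> V \<Longrightarrow> Psi (\<Phi> v) = v" and PsiV: "\<And>v. v \<in> V' \<Longrightarrow> Psi v \<in> V"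
    using hom_inv2[OF V V' Phi bPhi] unfolding Psi_def by auto
  have LPhi: "lin smul V V' \<Phi>" using homD(1)[OF Phi] .
  have Lp0: "lin smul V V p0" using homD(1)[OF hp0'] .
  have Lq0: "lin smul V' V' q0" using homD(1)[OF hq0'] .
  have LPsi: "lin smul V' V Psi" using homD(1)[OF hPsi] .
  have q0B: "\<And>b. b \<in> B \<Longrightarrow> q0 b = b"
    unfolding q0_def B_def using comp_mem[OF D' m0] by simp
  have p0A: "p0 x = x" if "x \<in> A" for x
    unfolding p0_def using comp_mem[OF D zero_less_Suc that[unfolded A_def]] by simp
  define k where "k w = q0 (\<Phi> w)" for w
  have hk: "hom A B k"
  proof -
    have "hom A V' \<Phi>" using hom_restr[OF Phi AV] hom_in[OF Phi] AV by blast
    then show ?thesis using hom_comp[OF _ hq0] unfolding k_def o_def by blast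
  qed
  define t where "t w = p0 (Psi (k w))" for w
  have ht: "hom A A t"
  proof -
    have "hom B V Psi" using hom_restr[OF hPsi BV] hom_in[OF hPsi] BV by blast
    then have "hom A V (\<lambda>w. Psi (k w))" using hom_comp[OF hk] unfolding o_def by blast
    then show ?thesis using hom_comp[OF _ hp0] unfolding t_def o_def by blast
  qed
  have bt: "bij_betw t A A" using tb unfolding t_def k_def p0_def q0_def Psi_def A_def .
  define a where "a = the_inv_into A t"
  have ha: "hom A A a" and ta: "\<And>v. v \<in> A \<Longrightarrow> t (a v) = v" and at: "\<And>v. v \<in> A \<Longrightarrow> a (t v) = v"
    and aA: "\<And>v. v \<in> A \<Longrightarrow> a v \<in> A"
    using hom_inv[OF rA ht bt] unfolding a_def by auto
  have kinj: "inj_on k A"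
  proof (rule inj_onI)
    fix x y assume xy: "x \<in> A" "y \<in> A" "k x = k y"
    then have "t x = t y" unfolding t_def by simp
    then show "x = y" using at xy by metis
  qed
  have k0: "k 0 = 0" using lin_zero[OF homD(1)[OF hk] ratm_sub[OF rA]] .
  define eps where "eps b = k (a (p0 (Psi b)))" for b
  have heps: "hom B B eps"
  proof -
    have "hom B V Psi" using hom_restr[OF hPsi BV] hom_in[OF hPsi] BV by blast
    then have "hom B A (\<lambda>b. p0 (Psi b))" using hom_comp[OF _ hp0] unfolding o_def by blast
    then have "hom B A (\<lambda>b. a (p0 (Psi b)))" using hom_comp[OF _ ha] unfolding o_def by blast
    then show ?thesis using hom_comp[OF _ hk] unfolding eps_def o_def by blast
  qed
  have epsk: "eps (k x) = k x" if x: "x \<in> A" for x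
  proof -
    have "p0 (Psi (k x)) = t x" unfolding t_def ..
    then show ?thesis unfolding eps_def using at[OF x] by simp
  qed
  have kim: "k ` A = B"
  proof
    show "k ` A \<subseteq> B" using hom_in[OF hk] by auto
    have "bij_betw eps B B \<or> (\<exists>N. \<forall>v\<in>B. (eps ^^ N) v = 0)" using fit_dich[OF iB heps] .
    moreover have "\<not> (\<exists>N. \<forall>v\<in>B. (eps ^^ N) v = 0)"
    proof
      assume "\<exists>N. \<forall>v\<in>B. (eps ^^ N) v = 0"
      then obtain N where N: "\<forall>v\<in>B. (eps ^^ N) v = 0" by blast
      obtain x where x: "x \<in> A" "x \<noteq> 0" using nonzero_elem[OF rA indecD(2)[OF iA]] by blast
      have "(eps ^^ j) (k x) = k x" for j
        by (induction j) (simp_all add: epsk[OF x(1)])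
      moreover have "k x \<in> B" using hom_in[OF hk x(1)] .
      ultimately have "k x = 0" using N by metis
      then have "k x = k 0" using k0 by simp
      moreover have "0 \<in> A" using subspace_0[OF ratm_sub[OF rA]] .
      ultimately show False using kinj x unfolding inj_on_def by blast
    qed
    ultimately have beps: "bij_betw eps B B" by blast
    show "B \<subseteq> k ` A"
    proof
      fix b assume b: "b \<in> B"
      then obtain b' where b': "b' \<in> B" "b = eps b'" using beps unfolding bij_betw_def by auto
      have "a (p0 (Psi b')) \<in> A" using aA hom_in[OF hp0] PsiV BV b'(1) by blast
      then show "b \<in> k ` A" using b'(2) unfolding eps_def by blast
    qed
  qed
  have isoAB: "iso A B" unfolding sl2_iso_def using hk kinj kim unfolding bij_betw_def by blast
  define K where "K = {v \<in> V. p0 v = 0}"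
  define U where "U = {u \<in> V'. q0 u = 0}"
  have RK: "rsub K V" unfolding K_def using ker_rat[OF V hp0'] .
  have RU: "rsub U V'" unfolding U_def using ker_rat[OF V' hq0'] .
  have rK: "ratm K" and rU: "ratm U" using rsubD(2)[OF RK] rsubD(2)[OF RU] .
  define l where "l v = \<Phi> v - q0 (\<Phi> v)" for v
  have hl: "hom K U l"
  proof -
    have KV: "K \<subseteq> V" unfolding K_def by auto
    have h1: "hom K V' \<Phi>" using hom_restr[OF Phi KV] hom_in[OF Phi] KV by blast
    have h2: "hom K V' (\<lambda>v. q0 (\<Phi> v))" using hom_comp[OF h1 hq0'] unfolding o_def .
    have h3: "hom K V' l" using hom_diff[OF h1 h2 V'] unfolding l_def .
    have "l v \<in> U" if v: "v \<in> K" for v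
    proof -
      have Pv: "\<Phi> v \<in> V'" using hom_in[OF h1 v] .
      have qPv: "q0 (\<Phi> v) \<in> B" using hom_in[OF hq0 Pv] .
      have "q0 (l v) = q0 (\<Phi> v) - q0 (q0 (\<Phi> v))"
        unfolding l_def using lin_diff[OF Lq0 sV' Pv] BV qPv by blast
      also have "\<dots> = 0" using q0B[OF qPv] by simp
      finally show ?thesis unfolding U_def using hom_in[OF h3 v] by simp
    qed
    then show ?thesis using hom_restr[OF h3 order_refl] by blast
  qed
  have l0: "x = 0" if x: "x \<in> K" "l x = 0" for x
  proof -
    have xV: "x \<in> V" using x(1) unfolding K_def by simp
    have Px: "\<Phi> x \<in> V'" using hom_in[OF Phi xV] .
    have eq: "\<Phi> x = q0 (\<Phi> x)" using x(2) unfolding l_def by simp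
    have "q0 (\<Phi> x) \<in> B" using hom_in[OF hq0 Px] .
    then obtain y where y: "y \<in> A" "k y = q0 (\<Phi> x)" using kim by (metis imageE)
    have "Psi (k y) = x" using y(2) eq PsiPhi[OF xV] by simp
    then have "t y = p0 x" unfolding t_def by simp
    also have "\<dots> = 0" using x(1) unfolding K_def by simp
    finally have "y = a 0" using at[OF y(1)] by simp
    also have "a 0 = 0" using hom_zero_pt[OF ha rA] .
    finally have "k y = 0" using k0 by simp
    then have "\<Phi> x = 0" using eq y(2) by simp
    then have "x = Psi 0" using PsiPhi[OF xV] by simp
    then show "x = 0" using lin_zero[OF LPsi sV'] by simp
  qed
  have linj: "inj_on l K"
  proof (rule inj_onI)
    fix x y assume xy: "x \<in> K" "y \<in> K" "l x = l y"
    have "l (x - y) = l x - l y" using lin_diff[OF homD(1)[OF hl] ratm_sub[OF rK] xy(1,2)] .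
    then have "l (x - y) = 0" using xy(3) by simp
    then have "x - y = 0" using l0 subspace_diff[OF ratm_sub[OF rK] xy(1,2)] by blast
    then show "x = y" by simp
  qed
  have lsurj: "U \<subseteq> l ` K"
  proof
    fix u assume u: "u \<in> U"
    have uV: "u \<in> V'" and qu: "q0 u = 0" using u unfolding U_def by auto
    define v where "v = Psi u"
    have vV: "v \<in> V" unfolding v_def using PsiV[OF uV] .
    define y where "y = a (p0 v)"
    have yA: "y \<in> A" unfolding y_def using aA hom_in[OF hp0 vV] by blast
    define b where "b = k y"
    have bB: "b \<in> B" unfolding b_def using hom_in[OF hk yA] .
    have bV: "b \<in> V'" using bB BV by auto
    have Pb: "p0 (Psi b) = p0 v" unfolding b_def using t_def ta[OF hom_in[OF hp0 vV]] unfolding y_def by metis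
    define x where "x = v - Psi b"
    have PsibV: "Psi b \<in> V" using PsiV[OF bV] .
    have xV: "x \<in> V" unfolding x_def using subspace_diff[OF sV vV PsibV] .
    have "p0 x = 0" unfolding x_def using lin_diff[OF Lp0 sV vV PsibV] Pb by simp
    then have xK: "x \<in> K" unfolding K_def using xV by simp
    have Px: "\<Phi> x = u - b" unfolding x_def using lin_diff[OF LPhi sV vV PsibV] PhiPsi[OF uV] PhiPsi[OF bV]
      unfolding v_def by simp
    have "q0 (\<Phi> x) = q0 u - q0 b" using Px lin_diff[OF Lq0 sV' uV bV] by simp
    also have "\<dots> = - b" using qu q0B[OF bB] by simp
    finally have "l x = u" unfolding l_def using Px by simp
    then show "u \<in> l ` K" using xK by blast
  qed
  have bl: "bij_betw l K U"
    unfolding bij_betw_def using linj lsurj hom_in[OF hl] by blast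
  have DK: "dsd K (\<lambda>i. Ws (Suc i)) n" unfolding K_def p0_def using dsd_tail[OF D V] .
  have DU: "dsd U (\<lambda>i. Us (Suc i)) m'" unfolding U_def q0_def using dsd_tail[OF D'[unfolded mm] V'] mm by simp
  have IK: "\<forall>i<n. indec (Ws (Suc i))" using IW by simp
  have IUU: "\<forall>j<m'. indec (Us (Suc j))" using IU mm by simp
  obtain s where nm: "n = m'" and s: "s permutes {..<n}" "\<forall>i<n. iso (Ws (Suc i)) (Us (Suc (s i)))"
    using IH[OF rK rU hl bl DK IK DU IUU] by blast
  define \<sigma> where "\<sigma> = (\<lambda>i. if i = 0 then 0 else Suc (s (i - 1)))"
  have sp: "\<sigma> permutes {..<Suc n}" unfolding \<sigma>_def using perm_shift[OF s(1)] .
  have "\<forall>i<Suc n. iso (Ws i) (Us (\<sigma> i))"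
  proof (intro allI impI)
    fix i assume i: "i < Suc n"
    show "iso (Ws i) (Us (\<sigma> i))"
    proof (cases i)
      case 0 then show ?thesis using isoAB unfolding \<sigma>_def A_def B_def by simp
    next
      case (Suc j)
      then have "j < n" using i by simp
      then show ?thesis using s(2) Suc unfolding \<sigma>_def by simp
    qed
  qed
  then show ?thesis using sp nm mm by blast
qed

end


context sl2c
begin

lemma ks:
  "ratm V \<Longrightarrow> ratm V' \<Longrightarrow> hom V V' \<Phi> \<Longrightarrow> bij_betw \<Phi> V V' \<Longrightarrow>
      dsd V Ws n \<Longrightarrow> (\<forall>i<n. indec (Ws i)) \<Longrightarrow> dsd V' Us m \<Longrightarrow> (\<forall>j<m. indec (Us j)) \<Longrightarrow>
      n = m \<and> (\<exists>\<sigma>. \<sigma> permutes {..<n} \<and> (\<forall>i<n. iso (Ws i) (Us (\<sigma> i))))"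
proof (induction n arbitrary: V V' \<Phi> Ws Us m)
  case 0
  have V0: "V \<subseteq> {0}"
  proof
    fix v assume "v \<in> V"
    then obtain w where "v = (\<Sum>i<(0::nat). w i)" using dsdD(2)[OF "0.prems"(5)] by blast
    then show "v \<in> {0}" by simp
  qed
  have P0: "\<Phi> 0 = 0" using lin_zero[OF homD(1)[OF "0.prems"(3)] ratm_sub[OF "0.prems"(1)]] .
  have "V' = \<Phi> ` V" using "0.prems"(4) unfolding bij_betw_def by simp
  then have V'0: "V' \<subseteq> {0}" using V0 P0 by auto
  have "m = 0"
  proof (rule ccontr)
    assume "m \<noteq> 0"
    then have m0: "0 < m" by simp
    have R: "rsub (Us 0) V'" using dsdD(1)[OF "0.prems"(7) m0] .
    have "Us 0 \<subseteq> {0}" using rsubD(1)[OF R] V'0 by auto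
    moreover have "Us 0 \<noteq> {0}" using indecD(2) "0.prems"(8) m0 by blast
    moreover have "0 \<in> Us 0" using subspace_0[OF rsubD(3)[OF R]] .
    ultimately show False by auto
  qed
  then show ?case by (intro conjI exI[of _ id]) (simp_all add: permutes_id id_def)
next
  case (Suc n)
  note pr = Suc.prems
  define A where "A = Ws 0"
  define Psi where "Psi = the_inv_into V \<Phi>"
  define th where "th j w = comp Ws (Suc n) (Psi (comp Us m (\<Phi> w) j)) 0" for j w
  have V: "ratm V" and V': "ratm V'" using pr by auto
  have sV: "subspace V" and sV': "subspace V'" using ratm_sub[OF V] ratm_sub[OF V'] .
  have RA: "rsub A V" unfolding A_def using dsdD(1)[OF pr(5)] by simp
  have rA: "ratm A" and AV: "A \<subseteq> V" using rsubD[OF RA] by auto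
  have iA: "indec A" unfolding A_def using pr(6) by simp
  have hPsi: "hom V' V Psi" and PsiPhi: "\<And>v. v \<in> V \<Longrightarrow> Psi (\<Phi> v) = v" and PsiV: "\<And>v. v \<in> V' \<Longrightarrow> Psi v \<in> V"
    using hom_inv2[OF V V' pr(3,4)] unfolding Psi_def by auto
  have hp0: "hom V A (\<lambda>v. comp Ws (Suc n) v 0)" unfolding A_def using comp_hom[OF pr(5) V] by simp
  have hp0V: "hom V V (\<lambda>v. comp Ws (Suc n) v 0)"
    using hom_restr[OF hp0 order_refl, of V] hom_in[OF hp0] AV by blast
  have hth: "hom A A (th j)" if j: "j < m" for j
  proof -
    have h1: "hom A V' \<Phi>" using hom_restr[OF pr(3) AV] hom_in[OF pr(3)] AV by blast
    have hq: "hom V' V' (\<lambda>u. comp Us m u j)"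
      using hom_restr[OF comp_hom[OF pr(7) V' j] order_refl] rsubD(1)[OF dsdD(1)[OF pr(7) j]]
        hom_in[OF comp_hom[OF pr(7) V' j]] by blast
    have "hom A V' (\<lambda>w. comp Us m (\<Phi> w) j)" using hom_comp[OF h1 hq] unfolding o_def .
    then have "hom A V (\<lambda>w. Psi (comp Us m (\<Phi> w) j))" using hom_comp[OF _ hPsi] unfolding o_def by blast
    then show ?thesis using hom_comp[OF _ hp0] unfolding th_def o_def by blast
  qed
  have sumid: "(\<Sum>j<m. th j w) = w" if w: "w \<in> A" for w
  proof -
    have wV: "w \<in> V" using w AV by auto
    have Pw: "\<Phi> w \<in> V'" using hom_in[OF pr(3) wV] .
    have cV: "comp Us m (\<Phi> w) j \<in> V'" if "j < m" for j
      using comp_in[OF pr(7) Pw that] rsubD(1)[OF dsdD(1)[OF pr(7) that]] by auto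
    have "(\<Sum>j<m. th j w) = comp Ws (Suc n) (\<Sum>j<m. Psi (comp Us m (\<Phi> w) j)) 0"
      unfolding th_def
      using lin_sum[OF homD(1)[OF hp0V] sV, of "{..<m}" "\<lambda>j. Psi (comp Us m (\<Phi> w) j)"]
        PsiV cV by simp
    also have "(\<Sum>j<m. Psi (comp Us m (\<Phi> w) j)) = Psi (\<Sum>j<m. comp Us m (\<Phi> w) j)"
      using lin_sum[OF homD(1)[OF hPsi] sV', of "{..<m}" "\<lambda>j. comp Us m (\<Phi> w) j"] cV by simp
    also have "(\<Sum>j<m. comp Us m (\<Phi> w) j) = \<Phi> w" using comp_sum[OF pr(7) Pw] by simp
    also have "Psi (\<Phi> w) = w" using PsiPhi[OF wV] .
    also have "comp Ws (Suc n) w 0 = w" using comp_mem[OF pr(5) zero_less_Suc w[unfolded A_def]] by simp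
    finally show ?thesis .
  qed
  have "bij_betw (\<lambda>w. \<Sum>j<m. th j w) A A"
    using bij_betw_cong[of A "\<lambda>w. \<Sum>j<m. th j w" id A] sumid by (simp add: bij_betw_id)
  then obtain j where j: "j < m" "bij_betw (th j) A A"
    using local_sum[OF indec_local[OF iA] rA, of "{..<m}" th] hth by blast
  have m0: "0 < m" using j by simp
  define tau where "tau = Transposition.transpose 0 j"
  have tau: "tau permutes {..<m}" unfolding tau_def using m0 j by (intro permutes_swap_id) simp_all
  define Us' where "Us' i = Us (tau i)" for i
  have D'': "dsd V' Us' m" unfolding Us'_def using dsd_perm[OF pr(7) tau] .
  have IU': "\<forall>i<m. indec (Us' i)" unfolding Us'_def using pr(8) permutes_in_image[OF tau] by simp
  have tb: "bij_betw (\<lambda>w. comp Ws (Suc n) (the_inv_into V \<Phi> (comp Us' m (\<Phi> w) 0)) 0) (Ws 0) (Ws 0)"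
  proof -
    have "comp Us' m (\<Phi> w) 0 = comp Us m (\<Phi> w) j" if "w \<in> Ws 0" for w
    proof -
      have "\<Phi> w \<in> V'" using hom_in[OF pr(3)] that AV unfolding A_def by auto
      then show ?thesis unfolding Us'_def using comp_perm[OF pr(7) tau] by (simp add: tau_def)
    qed
    then have "bij_betw (\<lambda>w. comp Ws (Suc n) (the_inv_into V \<Phi> (comp Us' m (\<Phi> w) 0)) 0) (Ws 0) (Ws 0) =
        bij_betw (th j) (Ws 0) (Ws 0)"
      unfolding th_def Psi_def by (intro bij_betw_cong) simp
    then show ?thesis using j(2) unfolding A_def by simp
  qed
  have KS: "Suc n = m \<and> (\<exists>\<sigma>. \<sigma> permutes {..<Suc n} \<and> (\<forall>i<Suc n. iso (Ws i) (Us' (\<sigma> i))))"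
    by (rule ks_step[OF _ V V' pr(3,4,5,6) D'' IU' m0 tb]) (rule Suc.IH; assumption)
  obtain s where nm: "Suc n = m" and s: "s permutes {..<Suc n}" "\<forall>i<Suc n. iso (Ws i) (Us' (s i))"
    using KS by blast
  have "(tau \<circ> s) permutes {..<Suc n}" using permutes_compose[OF s(1)] tau nm by simp
  moreover have "\<forall>i<Suc n. iso (Ws i) (Us ((tau \<circ> s) i))" using s(2) unfolding Us'_def by simp
  ultimately show ?case using nm by blast
qed

end

theorem theorem6p5:
  fixes smul :: "complex \<Rightarrow> 'v::ab_group_add \<Rightarrow> 'v"
    and V :: "'v set" and e f h :: "'v \<Rightarrow> 'v"
  assumes "vector_space smul"
    and "rational_module smul V e f h"
  shows "(\<exists>Vs n. jordan_hoelder_filtration smul V e f h Vs n)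
     \<and> (\<exists>Ws n. direct_sum_decomp smul V e f h Ws n \<and>
          (\<forall>i<n. indecomposable smul (Ws i) e f h \<and>
                 local_endomorphism_ring smul (Ws i) e f h))
     \<and> (\<forall>Ws n Us m.
          direct_sum_decomp smul V e f h Ws n \<and> (\<forall>i<n. indecomposable smul (Ws i) e f h) \<and>
          direct_sum_decomp smul V e f h Us m \<and> (\<forall>j<m. indecomposable smul (Us j) e f h)
          \<longrightarrow> n = m \<and> (\<exists>\<sigma>. \<sigma> permutes {..<n} \<and>
                 (\<forall>i<n. sl2_iso smul (Ws i) (Us (\<sigma> i)) e f h)))"
proof -
  interpret S: sl2c smul e f h using assms(1) unfolding sl2c_def .
  have V: "S.ratm V" using assms(2) .
  have A: "\<exists>Vs n. jordan_hoelder_filtration smul V e f h Vs n" using S.jh_exists[OF V] .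
  obtain Ws n where D: "S.dsd V Ws n" "\<forall>i<n. S.indec (Ws i)" using S.decomp_exists[OF V] by blast
  have B: "\<exists>Ws n. direct_sum_decomp smul V e f h Ws n \<and>
          (\<forall>i<n. indecomposable smul (Ws i) e f h \<and> local_endomorphism_ring smul (Ws i) e f h)"
    using D S.indec_local by blast
  have C: "n = m \<and> (\<exists>\<sigma>. \<sigma> permutes {..<n} \<and> (\<forall>i<n. sl2_iso smul (Ws i) (Us (\<sigma> i)) e f h))"
    if "S.dsd V Ws n" "\<forall>i<n. S.indec (Ws i)" "S.dsd V Us m" "\<forall>j<m. S.indec (Us j)" for Ws n Us m
    using S.ks[OF V V S.hom_id bij_betw_id[unfolded id_def] that] .
  show ?thesis using A B C by blast
qed

end
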